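(* Let $\mathcal{X},\mathcal{Y}$ be separable Hilbert spaces and $K:\mathcal{X}\to\mathcal{Y}$ a compact linear operator with Moore–Penrose inverse $K^+$. Let $Y_1,Y_2,\dots$ be i.i.d. $\mathcal{Y}$-valued random variables with $\mathbb{E}[Y_1]=\hat y\in\mathcal{D}(K^+)$ and $0<\mathbb{E}\|Y_1\|^2<\infty$. Let $R_\alpha:=F_\alpha(K^*K)K^*$, where $(F_\alpha)_{\alpha>0}$ is a regularising filter of qualification $\nu_0$ in the sense of the context. Set $\bar Y_n:=\frac1n\sum_{i\le n}Y_i$ and $\delta_n^{est}:=n^{-1/2}$. Assume that for some $0<\nu\le\nu_0$ and $\rho>0$ one has $K^+\hat y=(K^*K)^{\nu/2}w$ for some $w\in\mathcal{X}$ with $\|w\|\le\rho$. Let $\alpha(\cdot)$ be a parameter choice such that, for constants $0<c\le C$, $$c\Big(\frac{\delta_n^{est}}{\rho}\Big)^{\frac{2}{\nu+1}}\le\alpha(\delta_n^{est})\le C\Big(\frac{\delta_n^{est}}{\rho}\Big)^{\frac{2}{\nu+1}}\quad\text{for all }n.$$ Then there is a constant $C'$ (independent of $n$) such that $$\sqrt{\mathbb{E}\big\|R_{\alpha(\delta_n^{est})}\bar Y_n-K^+\hat y\big\|^2}\le C'\,(\delta_n^{est})^{\frac{\nu}{\nu+1}}\rho^{\frac{1}{\nu+1}}=\mathcal{O}\big(n^{-\frac{\nu}{2(\nu+1)}}\big).$$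
   Context: A regularising filter of qualification $\nu_0\in(0,\infty]$ is a family $(F_\alpha)_{\alpha>0}$ of bounded real-valued functions on $(0,\|K\|^2]$ such that: $\lim_{\alpha\to0}F_\alpha(\lambda)=1/\lambda$ for each $\lambda$; there is $C_R>0$ with $\lambda F_\alpha(\lambda)<C_R$ for all $\alpha>0$, $\lambda\in(0,\|K\|^2]$; $\nu_0$ is maximal such that for every $\nu\in(0,\nu_0]$ there is $C_\nu>0$ with $\sup_{\lambda\in(0,\|K\|^2]}\lambda^{\nu/2}|1-\lambda F_\alpha(\lambda)|\le C_\nu\alpha^{\nu/2}$ for all $\alpha>0$; and there is $C_F>0$ with $|F_\alpha(\lambda)|\le C_F/\alpha$ for all $\alpha>0$, $0<\lambda\le\|K\|^2$. $F_\alpha(K^*K)$ is defined by functional calculus. *)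

theory Defs
  imports "HOL-Probability.Probability"
begin

definition compact_op :: "('a::real_normed_vector \<Rightarrow> 'b::real_normed_vector) \<Rightarrow> bool" where
  "compact_op K \<longleftrightarrow> bounded_linear K \<and> compact (closure (K ` ball 0 1))"

definition orth_compl :: "'a::real_inner set \<Rightarrow> 'a set" where
  "orth_compl S = {z. \<forall>v\<in>S. inner z v = 0}"

definition mp_domain :: "('a::real_inner \<Rightarrow> 'b::real_inner) \<Rightarrow> 'b set" where
  "mp_domain K = {y. \<exists>x0 z. y = K x0 + z \<and> z \<in> orth_compl (range K)}"

definition mp_inverse :: "('a::real_inner \<Rightarrow> 'b::real_inner) \<Rightarrow> 'b \<Rightarrow> 'a" where
  "mp_inverse K y = (THE x. x \<in> orth_compl {v. K v = 0} \<and>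
       (\<exists>z \<in> orth_compl (range K). y = K x + z))"

definition fun_calc :: "(real \<Rightarrow> real) \<Rightarrow> ('a::real_inner \<Rightarrow> 'a) \<Rightarrow> 'a \<Rightarrow> 'a" where
  "fun_calc f A = (THE T. bounded_linear T \<and>
       (\<forall>x l. 0 < l \<longrightarrow> A x = l *\<^sub>R x \<longrightarrow> T x = f l *\<^sub>R x) \<and>
       (\<forall>x. A x = 0 \<longrightarrow> T x = 0))"

definition filter_estimate :: "(real \<Rightarrow> real \<Rightarrow> real) \<Rightarrow> real \<Rightarrow> real \<Rightarrow> bool" where
  "filter_estimate F L \<nu> \<longleftrightarrow> (\<exists>C\<^sub>\<nu>>0. \<forall>\<alpha>>0.
      \<forall>l\<in>{0<..L}. l powr (\<nu>/2) * \<bar>1 - l * F \<alpha> l\<bar> \<le> C\<^sub>\<nu> * \<alpha> powr (\<nu>/2))"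

text \<open>Regularising filter (F alpha lambda = F_alpha(lambda)) on (0, L] with qualification nu0.\<close>
definition regularising_filter :: "(real \<Rightarrow> real \<Rightarrow> real) \<Rightarrow> real \<Rightarrow> ereal \<Rightarrow> bool" where
  "regularising_filter F L \<nu>\<^sub>0 \<longleftrightarrow>
     0 < \<nu>\<^sub>0 \<and>
     (\<forall>\<alpha>>0. \<exists>B. \<forall>l\<in>{0<..L}. \<bar>F \<alpha> l\<bar> \<le> B) \<and>
     (\<forall>l\<in>{0<..L}. ((\<lambda>\<alpha>. F \<alpha> l) \<longlongrightarrow> 1 / l) (at_right 0)) \<and>
     (\<exists>C\<^sub>R>0. \<forall>\<alpha>>0. \<forall>l\<in>{0<..L}. l * F \<alpha> l < C\<^sub>R) \<and>
     (\<forall>\<nu>. 0 < \<nu> \<and> ereal \<nu> \<le> \<nu>\<^sub>0 \<longrightarrow> filter_estimate F L \<nu>) \<and>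
     (\<forall>\<nu>\<^sub>1. \<nu>\<^sub>0 < \<nu>\<^sub>1 \<longrightarrow> \<not> (\<forall>\<nu>. 0 < \<nu> \<and> ereal \<nu> \<le> \<nu>\<^sub>1 \<longrightarrow> filter_estimate F L \<nu>)) \<and>
     (\<exists>C\<^sub>F>0. \<forall>\<alpha>>0. \<forall>l\<in>{0<..L}. \<bar>F \<alpha> l\<bar> \<le> C\<^sub>F / \<alpha>)"

end

theory Submission
  imports Defs
begin

lemma proj_exists:
  fixes S :: "'a::{real_inner,complete_space} set"
  assumes sub: "subspace S" and cl: "closed S"
  shows "\<exists>p\<in>S. \<forall>s\<in>S. inner (x - p) s = 0"
proof -
  define D where "D = (\<lambda>s. norm (x - s)) ` S"
  define d where "d = Inf D"
  have "0 \<in> S" using sub by (simp add: subspace_0)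
  hence Dne: "D \<noteq> {}" by (auto simp: D_def)
  have Dbd: "bdd_below D" unfolding D_def by (rule bdd_belowI[of _ 0]) auto
  have dle: "d \<le> norm (x - s)" if "s \<in> S" for s
    unfolding d_def using Dbd that by (auto simp: D_def intro!: cInf_lower)
  have d0: "0 \<le> d" using dle[OF \<open>0 \<in> S\<close>] Dne Dbd unfolding d_def D_def
    by (intro cInf_greatest) auto
  have "\<exists>s\<in>S. norm (x - s) ^ 2 < d ^ 2 + 1 / (Suc n)" for n
  proof -
    have "d < sqrt (d^2 + 1 / Suc n)"
      by (intro real_less_rsqrt) simp
    then obtain z where "z \<in> D" "z < sqrt (d^2 + 1 / Suc n)"
      using cInf_lessD[OF Dne] unfolding d_def by blast
    then obtain s where s: "s \<in> S" "norm (x - s) < sqrt (d^2 + 1 / Suc n)" by (auto simp: D_def)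
    have "norm (x - s) ^ 2 < (sqrt (d^2 + 1 / Suc n)) ^ 2"
      using s(2) by (intro power_strict_mono) auto
    hence "norm (x - s) ^ 2 < d ^ 2 + 1 / Suc n" by simp
    thus ?thesis using s by blast
  qed
  then obtain s where sS: "\<And>n. s n \<in> S" and sn: "\<And>n. norm (x - s n) ^ 2 < d ^ 2 + 1 / Suc n"
    by metis
  have para: "norm (s n - s m) ^ 2 \<le> 2 / Suc n + 2 / Suc m" for n m
  proof -
    have mid: "(1/2) *\<^sub>R (s n + s m) \<in> S"
      using sub sS by (intro subspace_mul subspace_add) auto
    have "d \<le> norm (x - (1/2) *\<^sub>R (s n + s m))" by (rule dle[OF mid])
    hence dd: "d^2 \<le> norm (x - (1/2) *\<^sub>R (s n + s m)) ^ 2" using d0 by (simp add: power_mono)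
    have eq: "norm (s n - s m) ^ 2 = 2 * norm (x - s n) ^ 2 + 2 * norm (x - s m) ^ 2
              - 4 * norm (x - (1/2) *\<^sub>R (s n + s m)) ^ 2"
      by (simp add: power2_norm_eq_inner inner_diff_left inner_diff_right inner_add_left
          inner_add_right inner_commute algebra_simps)
    show ?thesis using eq dd sn[of n] sn[of m] by linarith
  qed
  have "Cauchy s"
  proof (rule metric_CauchyI)
    fix e :: real assume e: "e > 0"
    obtain N :: nat where N: "4 / e^2 < N" using reals_Archimedean2 by blast
    have Npos: "N > 0" using N e by (metis of_nat_0_less_iff less_trans zero_less_divide_iff zero_less_numeral zero_less_power)
    show "\<exists>M. \<forall>m\<ge>M. \<forall>n\<ge>M. dist (s m) (s n) < e"
    proof (intro exI allI impI)
      fix m n assume mn: "N \<le> m" "N \<le> n"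
      have "2 / Suc m \<le> 2 / N" using mn Npos by (intro divide_left_mono) auto
      moreover have "2 / Suc n \<le> 2 / N" using mn Npos by (intro divide_left_mono) auto
      moreover have "4 / N < e^2" using N e Npos by (simp add: field_simps)
      ultimately have "norm (s m - s n) ^ 2 < e ^ 2" using para[of m n] by linarith
      thus "dist (s m) (s n) < e" using e by (simp add: dist_norm power_less_imp_less_base)
    qed
  qed
  then obtain p where lim: "s \<longlonglongrightarrow> p" using Cauchy_convergent_iff convergent_def by blast
  have pS: "p \<in> S" using cl sS lim closed_sequentially by blast
  have lim2: "(\<lambda>n. norm (x - s n) ^ 2) \<longlonglongrightarrow> norm (x - p) ^ 2"
    by (intro tendsto_intros lim)
  have "norm (x - p) ^ 2 \<le> d ^ 2 + 1 / Suc n" for n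
  proof (rule LIMSEQ_le_const2[OF lim2], intro exI allI impI)
    fix m assume "m \<ge> n"
    hence "1 / Suc m \<le> 1 / Suc n" by (intro divide_left_mono) auto
    thus "norm (x - s m) ^ 2 \<le> d ^ 2 + 1 / Suc n" using sn[of m] by linarith
  qed
  hence "norm (x - p) ^ 2 \<le> d ^ 2"
  proof -
    assume h: "\<And>n. norm (x - p) ^ 2 \<le> d ^ 2 + 1 / Suc n"
    have "(\<lambda>n. d^2 + 1 / real (Suc n)) \<longlonglongrightarrow> d^2 + 0"
      by (intro tendsto_intros LIMSEQ_Suc[OF lim_inverse_n'])
    thus ?thesis using h by (intro LIMSEQ_le_const[of "\<lambda>n. d^2 + 1 / real (Suc n)"]) auto
  qed
  hence pmin: "norm (x - p) \<le> norm (x - t)" if "t \<in> S" for t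
    using dle[OF that] d0 by (meson norm_ge_zero order_trans power2_le_imp_le)
  have "inner (x - p) t = 0" if tS: "t \<in> S" for t
  proof (rule ccontr)
    define a where "a = inner (x - p) t"
    define N where "N = inner t t"
    assume "inner (x - p) t \<noteq> 0"
    hence a0: "a \<noteq> 0" by (simp add: a_def)
    have N0: "N \<ge> 0" by (simp add: N_def)
    define c where "c = a / (N + 1)"
    have "p + c *\<^sub>R t \<in> S" using sub pS tS by (intro subspace_add subspace_mul) auto
    from pmin[OF this] have "norm (x - p) ^ 2 \<le> norm (x - p - c *\<^sub>R t) ^ 2"
      by (simp add: diff_diff_eq power_mono)
    also have "\<dots> = norm (x - p) ^ 2 - 2 * c * a + c * c * N"
      unfolding power2_norm_eq_inner
      by (simp add: inner_diff_left inner_diff_right a_def N_def inner_commute algebra_simps)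
    finally have "2 * c * a \<le> c * c * N" by simp
    hence ineq: "(2 * c * a) * (N+1)^2 \<le> (c * c * N) * (N+1)^2"
      by (intro mult_right_mono) auto
    have cN: "c * (N+1) = a" using N0 by (simp add: c_def)
    have "(2 * c * a) * (N+1)^2 = 2 * a * (c * (N+1)) * (N+1)"
         "(c * c * N) * (N+1)^2 = (c * (N+1)) * (c * (N+1)) * N"
      by (simp_all add: power2_eq_square algebra_simps)
    hence "(2 * c * a) * (N+1)^2 = 2 * a^2 * (N+1)" "(c * c * N) * (N+1)^2 = a^2 * N"
      unfolding cN by (simp_all add: power2_eq_square)
    with ineq have "2 * a^2 * (N+1) \<le> a^2 * N" by simp
    moreover have "a^2 > 0" using a0 by simp
    moreover have "2 * a^2 * (N+1) = 2*(a^2*N) + 2*a^2" by (simp add: algebra_simps)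
    moreover have "a^2 * N \<ge> 0" using N0 by simp
    ultimately show False by linarith
  qed
  thus ?thesis using pS by blast
qed


lemma inner_eq_allI:
  fixes a b :: "'a::real_inner"
  assumes "\<And>x. inner x a = inner x b" shows "a = b"
proof -
  have "inner (a - b) (a - b) = 0" using assms[of "a - b"] by (simp add: inner_diff_right)
  thus ?thesis by simp
qed

lemma riesz:
  fixes \<phi> :: "'a::{real_inner,complete_space} \<Rightarrow> real"
  assumes bl: "bounded_linear \<phi>"
  shows "\<exists>u. \<forall>x. \<phi> x = inner x u"
proof (cases "\<forall>x. \<phi> x = 0")
  case True thus ?thesis by (intro exI[of _ 0]) auto
next
  case False
  then obtain x0 where x0: "\<phi> x0 \<noteq> 0" by blast
  interpret bounded_linear \<phi> by fact
  define N where "N = {x. \<phi> x = 0}"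
  have subN: "subspace N" unfolding N_def subspace_def by (auto simp: add scale)
  have clN: "closed N" unfolding N_def
    by (intro closed_Collect_eq continuous_on_const linear_continuous_on assms)
  obtain p where pN: "p \<in> N" and orth: "\<And>s. s \<in> N \<Longrightarrow> inner (x0 - p) s = 0"
    using proj_exists[OF subN clN, of x0] by blast
  define z where "z = x0 - p"
  have phz: "\<phi> z \<noteq> 0" using x0 pN by (simp add: z_def N_def diff)
  hence z0: "inner z z \<noteq> 0" by auto
  show ?thesis
  proof (intro exI allI)
    fix x
    have "\<phi> x *\<^sub>R z - \<phi> z *\<^sub>R x \<in> N" by (simp add: N_def diff scale)
    hence "inner z (\<phi> x *\<^sub>R z - \<phi> z *\<^sub>R x) = 0" using orth by (simp add: z_def)
    hence e: "\<phi> x * inner z z = \<phi> z * inner z x" by (simp add: inner_diff_right)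
    show "\<phi> x = inner x ((\<phi> z / inner z z) *\<^sub>R z)"
      using e z0 by (simp add: inner_commute field_simps)
  qed
qed

lemma adjoint_works_gen:
  fixes K :: "'a::{real_inner,complete_space} \<Rightarrow> 'b::real_inner"
  assumes "bounded_linear K"
  shows "inner (K x) y = inner x (adjoint K y)"
proof -
  have "\<forall>y. \<exists>u. \<forall>x. inner (K x) y = inner x u"
  proof
    fix y
    have "bounded_linear (\<lambda>x. inner (K x) y)"
      using bounded_linear_compose[OF bounded_linear_inner_left assms] by simp
    from riesz[OF this] show "\<exists>u. \<forall>x. inner (K x) y = inner x u" .
  qed
  then obtain g where "\<And>y x. inner (K x) y = inner x (g y)" by metis
  hence "\<exists>f'. \<forall>x y. K x \<bullet> y = x \<bullet> f' y" by blast
  from someI_ex[OF this] show ?thesis unfolding adjoint_def by blast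
qed

lemma adjoint_bl:
  fixes K :: "'a::{real_inner,complete_space} \<Rightarrow> 'b::real_inner"
  assumes bl: "bounded_linear K"
  shows "bounded_linear (adjoint K)"
proof (rule bounded_linear_intro[where K="onorm K"])
  note aw = adjoint_works_gen[OF bl]
  fix x y
  show "adjoint K (x + y) = adjoint K x + adjoint K y"
    by (rule inner_eq_allI) (simp add: aw[symmetric] inner_add_right)
next
  note aw = adjoint_works_gen[OF bl]
  fix r x
  show "adjoint K (r *\<^sub>R x) = r *\<^sub>R adjoint K x"
    by (rule inner_eq_allI) (simp add: aw[symmetric])
next
  note aw = adjoint_works_gen[OF bl]
  fix y
  have "norm (adjoint K y) ^ 2 = inner (K (adjoint K y)) y"
    by (simp add: aw power2_norm_eq_inner)
  also have "\<dots> \<le> norm (K (adjoint K y)) * norm y" by (rule norm_cauchy_schwarz)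
  also have "\<dots> \<le> onorm K * norm (adjoint K y) * norm y"
    by (intro mult_right_mono onorm[OF bl]) auto
  finally have h: "norm (adjoint K y) * norm (adjoint K y) \<le> (onorm K * norm y) * norm (adjoint K y)"
    by (simp add: power2_eq_square algebra_simps)
  show "norm (adjoint K y) \<le> norm y * onorm K"
  proof (cases "adjoint K y = 0")
    case True thus ?thesis using onorm_pos_le[OF bl] by simp
  next
    case False
    hence "norm (adjoint K y) > 0" by simp
    with h show ?thesis by (simp add: mult_le_cancel_right algebra_simps)
  qed
qed

lemma orth_summable:
  fixes f :: "'i \<Rightarrow> 'a::{real_inner,complete_space}"
  assumes sq: "(\<lambda>x. norm (f x) ^ 2) summable_on A"
    and orth: "\<And>x y. x \<in> A \<Longrightarrow> y \<in> A \<Longrightarrow> x \<noteq> y \<Longrightarrow> inner (f x) (f y) = 0"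
  shows "f summable_on A"
proof -
  have normsum: "norm (sum f G) ^ 2 = (\<Sum>x\<in>G. norm (f x) ^ 2)" if "finite G" "G \<subseteq> A" for G
    using that
  proof (induction G rule: finite_induct)
    case (insert a G)
    have "inner (f a) (sum f G) = 0"
      using insert by (auto simp: inner_sum_right intro!: sum.neutral orth)
    hence "norm (sum f (insert a G)) ^ 2 = norm (f a) ^ 2 + norm (sum f G) ^ 2"
      using insert by (simp add: power2_norm_eq_inner inner_add_left inner_add_right inner_commute)
    thus ?case using insert by simp
  qed simp
  from sq obtain L where lim: \<open>(sum (\<lambda>x. norm (f x) ^ 2) \<longlongrightarrow> L) (finite_subsets_at_top A)\<close>
    unfolding has_sum_def summable_on_def by blast
  have \<open>\<exists>P. eventually P (finite_subsets_at_top A) \<and>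
              (\<forall>F F'. P F \<and> P F' \<longrightarrow> dist (sum f F) (sum f F') < e)\<close> if \<open>e>0\<close> for e
  proof -
    define d P where \<open>d = e^2/8\<close> and \<open>P F \<longleftrightarrow> finite F \<and> F \<subseteq> A \<and> dist (sum (\<lambda>x. norm (f x) ^ 2) F) L < d\<close> for F
    have \<open>d > 0\<close>
      using \<open>e > 0\<close> by (simp add: d_def)
    have ev_P: \<open>eventually P (finite_subsets_at_top A)\<close>
      using lim
      by (auto simp add: P_def[abs_def] \<open>0 < d\<close> eventually_conj_iff eventually_finite_subsets_at_top_weakI tendsto_iff)
    moreover have \<open>dist (sum f F1) (sum f F2) < e\<close> if \<open>P F1\<close> and \<open>P F2\<close> for F1 F2
    proof -
      from ev_P
      obtain F' where \<open>finite F'\<close> and \<open>F' \<subseteq> A\<close> and P_sup_F': \<open>finite F \<and> F \<supseteq> F' \<and> F \<subseteq> A \<Longrightarrow> P F\<close> for F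
        by atomize_elim (simp add: eventually_finite_subsets_at_top)
      define F where \<open>F = F' \<union> F1 \<union> F2\<close>
      have \<open>finite F\<close> and \<open>F \<subseteq> A\<close>
        using F_def P_def[abs_def] that \<open>finite F'\<close> \<open>F' \<subseteq> A\<close> by auto
      have dist_F: \<open>dist (sum (\<lambda>x. norm (f x) ^ 2) F) L < d\<close>
        by (metis F_def \<open>F \<subseteq> A\<close> P_def P_sup_F' \<open>finite F\<close> le_supE order_refl)
      have dist_F_subset: \<open>dist (sum f F) (sum f F') < e/2\<close> if F': \<open>F' \<subseteq> F\<close> \<open>P F'\<close> for F'
      proof -
        have \<open>dist (sum f F) (sum f F') = norm (sum f (F-F'))\<close>
          unfolding dist_norm using \<open>finite F\<close> F' by (subst sum_diff) auto
        moreover have \<open>norm (sum f (F-F')) ^ 2 = (\<Sum>x\<in>F-F'. norm (f x) ^ 2)\<close>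
          using \<open>finite F\<close> \<open>F \<subseteq> A\<close> by (intro normsum) auto
        moreover have \<open>(\<Sum>x\<in>F-F'. norm (f x) ^ 2) = dist (\<Sum>x\<in>F. norm (f x) ^ 2) (\<Sum>x\<in>F'. norm (f x) ^ 2)\<close>
        proof -
          have le: "(\<Sum>x\<in>F'. norm (f x) ^ 2) \<le> (\<Sum>x\<in>F. norm (f x) ^ 2)"
            using \<open>finite F\<close> F' by (intro sum_mono2) auto
          show ?thesis unfolding dist_norm real_norm_def using \<open>finite F\<close> F' le
            by (subst sum_diff) auto
        qed
        moreover have \<open>\<dots> < 2 * d\<close>
          using dist_F F' unfolding P_def dist_norm real_norm_def by linarith
        ultimately have "norm (sum f (F-F')) ^ 2 < (e/2)^2" by (simp add: d_def power_divide)
        hence "norm (sum f (F-F')) < e/2"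
          by (rule power2_less_imp_less) (use \<open>e > 0\<close> in simp)
        thus ?thesis using \<open>dist (sum f F) (sum f F') = _\<close> by simp
      qed
      have \<open>dist (sum f F1) (sum f F2) \<le> dist (sum f F) (sum f F1) + dist (sum f F) (sum f F2)\<close>
        by (rule dist_triangle3)
      also have \<open>\<dots> < e/2 + e/2\<close>
        by (intro add_strict_mono dist_F_subset that) (auto simp: F_def)
      finally show \<open>dist (sum f F1) (sum f F2) < e\<close> by simp
    qed
    ultimately show ?thesis by blast
  qed
  then have \<open>cauchy_filter (filtermap (sum f) (finite_subsets_at_top A))\<close>
    by (simp add: cauchy_filter_metric_filtermap)
  moreover have "Topological_Spaces.complete (UNIV::'a set)"
    by (meson Cauchy_convergent UNIV_I complete_def convergent_def)
  ultimately obtain L' where \<open>(sum f \<longlongrightarrow> L') (finite_subsets_at_top A)\<close>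
    using complete_uniform[where S=UNIV] by (force simp add: filterlim_def)
  then show ?thesis
    using summable_on_def has_sum_def by blast
qed


lemma pyth:
  fixes v w :: "'a::real_inner"
  assumes "inner v w = 0"
  shows "norm (v + w) ^ 2 = norm v ^ 2 + norm w ^ 2"
  using assms by (simp add: power2_norm_eq_inner inner_add_left inner_add_right inner_commute)

lemma has_sum_norm_le:
  fixes f :: "'i \<Rightarrow> 'a::real_normed_vector"
  assumes "(f has_sum S) A" "\<And>F. finite F \<Longrightarrow> F \<subseteq> A \<Longrightarrow> norm (sum f F) \<le> c"
  shows "norm S \<le> c"
proof -
  have "((\<lambda>F. norm (sum f F)) \<longlongrightarrow> norm S) (finite_subsets_at_top A)"
    using assms(1) unfolding has_sum_def by (intro tendsto_norm)
  thus ?thesis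
    by (rule tendsto_upperbound) (use assms(2) in auto)
qed

lemma has_sum_single_at:
  fixes g :: "'i \<Rightarrow> 'a::{comm_monoid_add,topological_space}"
  assumes "m \<in> A" "\<And>l. l \<in> A \<Longrightarrow> l \<noteq> m \<Longrightarrow> g l = 0"
  shows "(g has_sum g m) A"
proof -
  have "(g has_sum g m) {m}" by (simp add: has_sum_finiteI)
  thus ?thesis by (subst has_sum_cong_neutral[where T="{m}"]) (use assms in auto)
qed

locale cop =
  fixes K :: "'x::{real_inner,complete_space} \<Rightarrow> 'y::{real_inner,complete_space}"
  assumes cK: "compact_op K"
begin

lemma blK: "bounded_linear K" using cK by (simp add: compact_op_def)

abbreviation "A \<equiv> adjoint K \<circ> K"

lemma adj: "inner (K x) y = inner x (adjoint K y)"
  by (rule adjoint_works_gen[OF blK])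

lemma blKs: "bounded_linear (adjoint K)" by (rule adjoint_bl[OF blK])

lemma blA: "bounded_linear A"
  unfolding comp_def by (rule bounded_linear_compose[OF blKs blK])

lemma A_inner: "inner (A x) y = inner (K x) (K y)"
  by (metis adj inner_commute comp_apply)

lemma A_sym: "inner (A x) y = inner x (A y)"
  by (metis A_inner inner_commute)

lemma A_quad: "inner (A x) x = norm (K x) ^ 2"
  unfolding power2_norm_eq_inner real_sqrt_pow2[OF inner_ge_zero] by (rule A_inner)

definition E :: "real \<Rightarrow> 'x set" where "E l = {e. A e = l *\<^sub>R e}"

definition Lam :: "real set" where "Lam = {l. 0 < l \<and> (\<exists>e. e \<noteq> 0 \<and> A e = l *\<^sub>R e)}"

lemma sub_E: "subspace (E l)"
proof -
  interpret bounded_linear A by (rule blA)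
  show ?thesis unfolding subspace_def E_def using add scale
    by (auto simp: algebra_simps simp del: comp_apply)
qed

lemma closed_E: "closed (E l)"
proof -
  have "continuous_on UNIV A" by (rule linear_continuous_on[OF blA])
  moreover have "continuous_on UNIV (\<lambda>e::'x. l *\<^sub>R e)"
    by (intro continuous_intros)
  ultimately show ?thesis unfolding E_def by (rule closed_Collect_eq)
qed

lemma E_orth: "l \<noteq> m \<Longrightarrow> e \<in> E l \<Longrightarrow> f \<in> E m \<Longrightarrow> inner e f = 0"
proof -
  assume lm: "l \<noteq> m" and e: "e \<in> E l" and f: "f \<in> E m"
  have "l * inner e f = inner (A e) f" using e by (simp add: E_def)
  also have "\<dots> = inner e (A f)" by (rule A_sym)
  also have "\<dots> = m * inner e f" using f by (simp add: E_def)
  finally show ?thesis using lm by simp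
qed

lemma Lam_le: "l \<in> Lam \<Longrightarrow> l \<le> (onorm K)^2"
proof -
  assume "l \<in> Lam"
  then obtain e where l0: "l > 0" and e0: "e \<noteq> 0" and Ae: "A e = l *\<^sub>R e" by (auto simp: Lam_def)
  have "l * norm e ^ 2 = inner (A e) e" using Ae by (simp add: power2_norm_eq_inner)
  also have "\<dots> = norm (K e) ^ 2" by (rule A_quad)
  also have "\<dots> \<le> (onorm K * norm e) ^ 2" by (intro power_mono onorm[OF blK]) auto
  finally have "l * norm e ^ 2 \<le> (onorm K)^2 * norm e ^ 2" by (simp add: power_mult_distrib)
  thus ?thesis using e0 by simp
qed

lemma Lam_pos: "l \<in> Lam \<Longrightarrow> 0 < l" by (simp add: Lam_def)

definition P :: "real \<Rightarrow> 'x \<Rightarrow> 'x" where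
  "P l x = (SOME p. p \<in> E l \<and> (\<forall>s\<in>E l. inner (x - p) s = 0))"

lemma P_spec: "P l x \<in> E l \<and> (\<forall>s\<in>E l. inner (x - P l x) s = 0)"
proof -
  have "\<exists>p. p \<in> E l \<and> (\<forall>s\<in>E l. inner (x - p) s = 0)"
    using proj_exists[OF sub_E closed_E] by blast
  thus ?thesis unfolding P_def by (rule someI_ex)
qed

lemma P_in: "P l x \<in> E l" using P_spec by blast
lemma P_orth: "s \<in> E l \<Longrightarrow> inner (x - P l x) s = 0" using P_spec by blast

lemma P_unique:
  assumes "p \<in> E l" "\<And>s. s \<in> E l \<Longrightarrow> inner (x - p) s = 0"
  shows "P l x = p"
proof -
  have d: "P l x - p \<in> E l" using P_in assms(1) sub_E by (simp add: subspace_diff)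
  have "inner (x - p) (P l x - p) - inner (x - P l x) (P l x - p) = 0"
    using assms(2)[OF d] P_orth[OF d] by simp
  hence "inner (P l x - p) (P l x - p) = 0" by (simp add: inner_diff_left inner_commute)
  thus ?thesis by simp
qed

lemma AP: "A (P l x) = l *\<^sub>R P l x" using P_in by (simp add: E_def)

lemma P_inner: "inner (P l a) b = inner a (P l b)"
proof -
  have "inner (P l a) b = inner (P l a) (P l b)"
    using P_orth[OF P_in[of l a], of b] by (simp add: inner_diff_left inner_diff_right inner_commute)
  also have "\<dots> = inner a (P l b)"
    using P_orth[OF P_in[of l b], of a] by (simp add: inner_diff_left)
  finally show ?thesis .
qed

lemma P_idem: "e \<in> E l \<Longrightarrow> P l e = e"
  by (rule P_unique) auto

lemma P_other: "e \<in> E m \<Longrightarrow> l \<noteq> m \<Longrightarrow> P l e = 0"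
proof (rule P_unique)
  assume "e \<in> E m" "l \<noteq> m"
  show "0 \<in> E l" using sub_E by (simp add: subspace_0)
  fix s assume "s \<in> E l"
  thus "inner (e - 0) s = 0" using E_orth[of m l e s] \<open>e \<in> E m\<close> \<open>l \<noteq> m\<close> by auto
qed

lemma P_PP: "P l (P l x) = P l x" by (rule P_idem[OF P_in])

lemma P_norm: "norm (P l x) ^ 2 \<le> norm x ^ 2"
proof -
  have "inner (x - P l x) (P l x) = 0" by (rule P_orth[OF P_in])
  hence "norm x ^ 2 = norm (x - P l x) ^ 2 + norm (P l x) ^ 2"
    by (simp add: power2_norm_eq_inner inner_diff_left inner_diff_right inner_commute)
  thus ?thesis by simp
qed

lemma blP: "bounded_linear (P l)"
proof (rule bounded_linear_intro[where K=1])
  fix x y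
  show "P l (x + y) = P l x + P l y"
  proof (rule P_unique)
    show "P l x + P l y \<in> E l" using P_in sub_E by (simp add: subspace_add)
    fix s assume s: "s \<in> E l"
    have "x + y - (P l x + P l y) = (x - P l x) + (y - P l y)" by simp
    hence "inner (x + y - (P l x + P l y)) s = inner (x - P l x) s + inner (y - P l y) s"
      by (simp only: inner_add_left)
    thus "inner (x + y - (P l x + P l y)) s = 0" using P_orth[OF s] by simp
  qed
next
  fix r x
  show "P l (r *\<^sub>R x) = r *\<^sub>R P l x"
  proof (rule P_unique)
    show "r *\<^sub>R P l x \<in> E l" using P_in sub_E by (simp add: subspace_mul)
    fix s assume "s \<in> E l"
    thus "inner (r *\<^sub>R x - r *\<^sub>R P l x) s = 0"
      using P_orth[of s l x] by (simp add: inner_diff_left)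
  qed
next
  fix x
  show "norm (P l x) \<le> norm x * 1" using power2_le_imp_le[OF P_norm[of l x]] by simp
qed

lemma P_diff_orth_sum:
  assumes "finite G" and that: "m \<in> G"
  shows "inner (x - (\<Sum>l\<in>G. P l x)) (P m x) = 0"
proof -
  have "(\<Sum>l\<in>G. inner (P l x) (P m x)) = inner (P m x) (P m x)"
  proof -
    have "(\<Sum>l\<in>G. inner (P l x) (P m x)) = (\<Sum>l\<in>{m}. inner (P l x) (P m x))"
      using that assms E_orth[OF _ P_in P_in] by (intro sum.mono_neutral_right) auto
    thus ?thesis by simp
  qed
  moreover have "inner x (P m x) = inner (P m x) (P m x)"
    using P_orth[OF P_in[of m x], of x] by (simp add: inner_diff_left)
  ultimately show ?thesis by (simp add: inner_diff_left inner_sum_left)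
qed

lemma orth_norm_sum:
  assumes "finite G"
  shows "norm (\<Sum>l\<in>G. c l *\<^sub>R P l x) ^ 2 = (\<Sum>l\<in>G. (c l)^2 * norm (P l x) ^ 2)"
  using assms
proof (induction G rule: finite_induct)
  case (insert a G)
  have "inner (c a *\<^sub>R P a x) (\<Sum>l\<in>G. c l *\<^sub>R P l x) = 0"
    using insert E_orth[OF _ P_in P_in] unfolding inner_sum_right
    by (intro sum.neutral ballI) (metis inner_scaleR_left inner_scaleR_right mult_zero_right)
  hence "norm (\<Sum>l\<in>insert a G. c l *\<^sub>R P l x) ^ 2
         = norm (c a *\<^sub>R P a x) ^ 2 + norm (\<Sum>l\<in>G. c l *\<^sub>R P l x) ^ 2"
  proof -
    have "(\<Sum>l\<in>insert a G. c l *\<^sub>R P l x) = c a *\<^sub>R P a x + (\<Sum>l\<in>G. c l *\<^sub>R P l x)"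
      using insert(1,2) by simp
    thus ?thesis using pyth[OF \<open>inner (c a *\<^sub>R P a x) _ = 0\<close>] by simp
  qed
  thus ?case using insert by (simp add: power_mult_distrib)
qed simp

lemma bessel:
  assumes "finite G"
  shows "(\<Sum>l\<in>G. norm (P l x) ^ 2) \<le> norm x ^ 2"
proof -
  define s where "s = (\<Sum>l\<in>G. P l x)"
  have "inner (x - s) s = 0"
    unfolding s_def inner_sum_right using P_diff_orth_sum[OF assms] by (simp add: s_def)
  hence "norm x ^ 2 = norm (x - s) ^ 2 + norm s ^ 2"
    by (simp add: power2_norm_eq_inner inner_diff_left inner_diff_right inner_commute)
  moreover have "norm s ^ 2 = (\<Sum>l\<in>G. norm (P l x) ^ 2)"
    using orth_norm_sum[OF assms, of "\<lambda>_. 1" x] by (simp add: s_def)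
  ultimately show ?thesis by simp
qed

end

context cop begin

lemma P_add: "P l (x + y) = P l x + P l y"
proof - interpret bounded_linear "P l" by (rule blP) show ?thesis by (rule add) qed

lemma P_scale: "P l (r *\<^sub>R x) = r *\<^sub>R P l x"
proof - interpret bounded_linear "P l" by (rule blP) show ?thesis by (rule scale) qed

definition Phi :: "(real \<Rightarrow> real) \<Rightarrow> 'x \<Rightarrow> 'x" where
  "Phi h x = infsum (\<lambda>l. h l *\<^sub>R P l x) Lam"

definition bnd :: "(real \<Rightarrow> real) \<Rightarrow> real \<Rightarrow> bool" where
  "bnd h B \<longleftrightarrow> 0 \<le> B \<and> (\<forall>l\<in>Lam. \<bar>h l\<bar> \<le> B)"

lemma partial_sq_bound:
  assumes "bnd h B" "finite F" "F \<subseteq> Lam"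
  shows "(\<Sum>l\<in>F. (h l)^2 * norm (P l x) ^ 2) \<le> B^2 * norm x ^ 2"
proof -
  have "(\<Sum>l\<in>F. (h l)^2 * norm (P l x) ^ 2) \<le> (\<Sum>l\<in>F. B^2 * norm (P l x) ^ 2)"
  proof (intro sum_mono mult_right_mono)
    fix l assume "l \<in> F"
    hence "\<bar>h l\<bar> \<le> B" using assms unfolding bnd_def by auto
    hence "\<bar>h l\<bar>^2 \<le> B^2" by (intro power_mono) auto
    thus "(h l)^2 \<le> B^2" by simp
  qed auto
  also have "\<dots> = B^2 * (\<Sum>l\<in>F. norm (P l x) ^ 2)" by (simp add: sum_distrib_left)
  also have "\<dots> \<le> B^2 * norm x ^ 2" by (intro mult_left_mono bessel assms) auto
  finally show ?thesis .
qed

lemma Phi_summable: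
  assumes "bnd h B"
  shows "(\<lambda>l. h l *\<^sub>R P l x) summable_on Lam"
proof (rule orth_summable)
  show "(\<lambda>l. norm (h l *\<^sub>R P l x) ^ 2) summable_on Lam"
  proof (rule nonneg_bdd_above_summable_on)
    show "bdd_above (sum (\<lambda>l. norm (h l *\<^sub>R P l x) ^ 2) ` {F. F \<subseteq> Lam \<and> finite F})"
    proof (rule bdd_aboveI2)
      fix F assume "F \<in> {F. F \<subseteq> Lam \<and> finite F}"
      hence "(\<Sum>l\<in>F. (h l)^2 * norm (P l x) ^ 2) \<le> B^2 * norm x ^ 2"
        using partial_sq_bound[OF assms] by auto
      thus "(\<Sum>l\<in>F. norm (h l *\<^sub>R P l x) ^ 2) \<le> B^2 * norm x ^ 2"
        by (simp add: power_mult_distrib)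
    qed
  qed auto
next
  fix l m assume "l \<in> Lam" "m \<in> Lam" "l \<noteq> m"
  thus "inner (h l *\<^sub>R P l x) (h m *\<^sub>R P m x) = 0"
    using E_orth[OF _ P_in P_in] by simp
qed

lemma Phi_has:
  assumes "bnd h B"
  shows "((\<lambda>l. h l *\<^sub>R P l x) has_sum Phi h x) Lam"
  unfolding Phi_def using Phi_summable[OF assms] by simp

lemma Phi_norm:
  assumes "bnd h B"
  shows "norm (Phi h x) \<le> B * norm x"
proof (rule has_sum_norm_le[OF Phi_has[OF assms]])
  fix F assume F: "finite F" "F \<subseteq> Lam"
  have "norm (\<Sum>l\<in>F. h l *\<^sub>R P l x) ^ 2 \<le> (B * norm x) ^ 2"
    using orth_norm_sum[OF F(1)] partial_sq_bound[OF assms F] by (simp add: power_mult_distrib)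
  thus "norm (\<Sum>l\<in>F. h l *\<^sub>R P l x) \<le> B * norm x"
    by (rule power2_le_imp_le) (use assms in \<open>simp add: bnd_def\<close>)
qed

lemma Phi_eig:
  assumes "m \<in> Lam" "e \<in> E m"
  shows "Phi h e = h m *\<^sub>R e"
proof -
  have "((\<lambda>l. h l *\<^sub>R P l e) has_sum (h m *\<^sub>R P m e)) Lam"
    by (rule has_sum_single_at[OF assms(1)]) (use P_other[OF assms(2)] in simp)
  thus ?thesis unfolding Phi_def using P_idem[OF assms(2)] by (simp add: infsumI)
qed

lemma Phi_ker:
  assumes "A k = 0"
  shows "Phi h k = 0"
proof -
  have kE: "k \<in> E 0" using assms by (simp add: E_def)
  have "\<And>l. l \<in> Lam \<Longrightarrow> h l *\<^sub>R P l k = 0" using P_other[OF kE] Lam_pos by force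
  hence "((\<lambda>l. h l *\<^sub>R P l k) has_sum 0) Lam" by (rule has_sum_0)
  thus ?thesis unfolding Phi_def by (simp add: infsumI)
qed

lemma P_Phi:
  assumes "bnd h B" "m \<in> Lam"
  shows "P m (Phi h x) = h m *\<^sub>R P m x"
proof -
  have "((\<lambda>l. P m (h l *\<^sub>R P l x)) has_sum P m (Phi h x)) Lam"
    by (rule has_sum_bounded_linear[OF blP Phi_has[OF assms(1)]])
  moreover have "((\<lambda>l. P m (h l *\<^sub>R P l x)) has_sum P m (h m *\<^sub>R P m x)) Lam"
  proof (rule has_sum_single_at[OF assms(2)])
    fix l assume "l \<in> Lam" "l \<noteq> m"
    thus "P m (h l *\<^sub>R P l x) = 0"
      using P_other[OF P_in[of l x], of m] P_scale by simp
  qed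
  ultimately have "P m (Phi h x) = P m (h m *\<^sub>R P m x)" by (rule has_sum_unique)
  thus ?thesis using P_scale P_PP by simp
qed

lemma bl_Phi:
  assumes "bnd h B"
  shows "bounded_linear (Phi h)"
proof (rule bounded_linear_intro[where K=B])
  fix x y
  have "((\<lambda>l. h l *\<^sub>R P l x + h l *\<^sub>R P l y) has_sum (Phi h x + Phi h y)) Lam"
    by (intro has_sum_add Phi_has[OF assms])
  moreover have "(\<lambda>l. h l *\<^sub>R P l x + h l *\<^sub>R P l y) = (\<lambda>l. h l *\<^sub>R P l (x + y))"
    by (simp add: P_add scaleR_add_right)
  ultimately have "((\<lambda>l. h l *\<^sub>R P l (x + y)) has_sum (Phi h x + Phi h y)) Lam" by simp
  from has_sum_unique[OF Phi_has[OF assms] this] show "Phi h (x + y) = Phi h x + Phi h y" .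
next
  fix r x
  have "((\<lambda>l. r *\<^sub>R (h l *\<^sub>R P l x)) has_sum (r *\<^sub>R Phi h x)) Lam"
    by (intro has_sum_scaleR Phi_has[OF assms])
  moreover have "(\<lambda>l. r *\<^sub>R (h l *\<^sub>R P l x)) = (\<lambda>l. h l *\<^sub>R P l (r *\<^sub>R x))"
    by (simp add: P_scale mult.commute)
  ultimately have "((\<lambda>l. h l *\<^sub>R P l (r *\<^sub>R x)) has_sum (r *\<^sub>R Phi h x)) Lam" by simp
  from has_sum_unique[OF Phi_has[OF assms] this] show "Phi h (r *\<^sub>R x) = r *\<^sub>R Phi h x" .
next
  fix x show "norm (Phi h x) \<le> norm x * B" using Phi_norm[OF assms] by (simp add: mult.commute)
qed

lemma Phi_comp:
  assumes "bnd b B"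
  shows "Phi a (Phi b x) = Phi (\<lambda>l. a l * b l) x"
proof -
  have "Phi a (Phi b x) = infsum (\<lambda>l. a l *\<^sub>R P l (Phi b x)) Lam" by (rule Phi_def)
  also have "\<dots> = infsum (\<lambda>l. (a l * b l) *\<^sub>R P l x) Lam"
    by (rule infsum_cong) (simp add: P_Phi[OF assms])
  also have "\<dots> = Phi (\<lambda>l. a l * b l) x" by (rule Phi_def[symmetric])
  finally show ?thesis .
qed

lemma Phi_diff:
  assumes "bnd a B1" "bnd b B2"
  shows "Phi a x - Phi b x = Phi (\<lambda>l. a l - b l) x"
proof -
  have "((\<lambda>l. a l *\<^sub>R P l x + (-1) *\<^sub>R (b l *\<^sub>R P l x)) has_sum (Phi a x + (-1) *\<^sub>R Phi b x)) Lam"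
    by (intro has_sum_add has_sum_scaleR Phi_has[OF assms(1)] Phi_has[OF assms(2)])
  moreover have "(\<lambda>l. a l *\<^sub>R P l x + (-1) *\<^sub>R (b l *\<^sub>R P l x)) = (\<lambda>l. (a l - b l) *\<^sub>R P l x)"
    by (simp add: algebra_simps)
  ultimately show ?thesis unfolding Phi_def[of "\<lambda>l. a l - b l"] by (simp add: infsumI)
qed

lemma Phi_selfadj:
  assumes "bnd h B"
  shows "inner (Phi h a) b = inner a (Phi h b)"
proof -
  have "((\<lambda>l. inner (h l *\<^sub>R P l a) b) has_sum inner (Phi h a) b) Lam"
    by (rule has_sum_bounded_linear[OF bounded_linear_inner_left Phi_has[OF assms]])
  moreover have "((\<lambda>l. inner a (h l *\<^sub>R P l b)) has_sum inner a (Phi h b)) Lam"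
    by (rule has_sum_bounded_linear[OF bounded_linear_inner_right Phi_has[OF assms]])
  moreover have "(\<lambda>l. inner a (h l *\<^sub>R P l b)) = (\<lambda>l. inner (h l *\<^sub>R P l a) b)"
    by (simp add: P_inner)
  ultimately show ?thesis using has_sum_unique by metis
qed

end

context cop begin

definition V :: "'x set" where "V = {v. \<forall>l\<in>Lam. \<forall>s\<in>E l. inner v s = 0}"

lemma V_closed: "closed V"
proof -
  have "V = (\<Inter>l\<in>Lam. \<Inter>s\<in>E l. {v. inner v s = 0})" by (auto simp: V_def)
  moreover have "closed {v::'x. inner v s = 0}" for s
    by (intro closed_Collect_eq continuous_intros)
  ultimately show ?thesis by (auto intro!: closed_INT)
qed

lemma V_sub: "subspace V"
  unfolding subspace_def V_def by (auto simp: inner_add_left)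

lemma V_inv: "v \<in> V \<Longrightarrow> A v \<in> V"
proof -
  assume v: "v \<in> V"
  { fix l s assume l: "l \<in> Lam" and s: "s \<in> E l"
    have "inner (A v) s = inner v (A s)" by (rule A_sym)
    also have "\<dots> = l * inner v s" using s by (simp add: E_def)
    also have "\<dots> = 0" using v l s by (simp add: V_def)
    finally have "inner (A v) s = 0" . }
  thus ?thesis by (simp add: V_def)
qed

lemma K0: "K 0 = 0"
proof - interpret bounded_linear K by (rule blK) show ?thesis by (rule zero) qed
lemma Ks0: "adjoint K 0 = 0"
proof - interpret bounded_linear "adjoint K" by (rule blKs) show ?thesis by (rule zero) qed
lemma K_scale: "K (r *\<^sub>R x) = r *\<^sub>R K x"
proof - interpret bounded_linear K by (rule blK) show ?thesis by (rule scale) qed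

lemma V_ker:
  assumes v0: "v0 \<in> V"
  shows "A v0 = 0"
proof (rule ccontr)
  assume Av0: "A v0 \<noteq> 0"
  define S where "S = (\<lambda>v. norm (K v) ^ 2) ` {v\<in>V. norm v < 1}"
  define m where "m = Sup S"
  have V0: "0 \<in> V" using V_sub by (simp add: subspace_0)
  have Sne: "S \<noteq> {}" using V0 by (auto simp: S_def)
  have Sbd: "bdd_above S"
  proof (rule bdd_aboveI[of _ "(onorm K)^2"])
    fix q assume "q \<in> S"
    then obtain v where v: "norm v < 1" "q = norm (K v) ^ 2" by (auto simp: S_def)
    have "norm (K v) \<le> onorm K * norm v" by (rule onorm[OF blK])
    also have "\<dots> \<le> onorm K" using v onorm_pos_le[OF blK]
      by (simp add: mult_left_le)
    finally show "q \<le> (onorm K)^2" using v by (simp add: power_mono)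
  qed
  have Sup_ge: "q \<le> m" if "q \<in> S" for q unfolding m_def by (rule cSup_upper[OF that Sbd])
  have inS: "norm (K v) ^ 2 \<in> S" if "v \<in> V" "norm v < 1" for v using that by (auto simp: S_def)
  have Kv0: "K v0 \<noteq> 0" using Av0 Ks0 by auto
  hence nv0: "v0 \<noteq> 0" using K0 by auto
  define v1 where "v1 = (1 / (2 * norm v0)) *\<^sub>R v0"
  have v1V: "v1 \<in> V" using V_sub v0 by (simp add: v1_def subspace_mul)
  have nv1: "norm v1 < 1" using nv0 by (simp add: v1_def)
  have "K v1 = (1 / (2 * norm v0)) *\<^sub>R K v0"
    by (simp add: v1_def K_scale)
  hence "norm (K v1) > 0" using Kv0 nv0 by simp
  hence mpos: "m > 0" using Sup_ge[OF inS[OF v1V nv1]] by (smt (verit) zero_less_power)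
  have Qb: "norm (K u) ^ 2 \<le> m * norm u ^ 2" if uV: "u \<in> V" for u
  proof (cases "u = 0")
    case True thus ?thesis using K0 by simp
  next
    case False
    hence nu: "norm u > 0" by simp
    have "norm (K u) ^ 2 / norm u ^ 2 \<le> m"
    proof (rule field_le_mult_one_interval)
      fix z :: real assume z: "0 < z" "z < 1"
      define w where "w = (sqrt z / norm u) *\<^sub>R u"
      have wV: "w \<in> V" using V_sub uV by (simp add: w_def subspace_mul)
      have nw: "norm w < 1" using z nu by (simp add: w_def real_sqrt_lt_1_iff)
      have "K w = (sqrt z / norm u) *\<^sub>R K u" by (simp add: w_def K_scale)
      hence "norm (K w) ^ 2 = z * (norm (K u) ^ 2 / norm u ^ 2)"
        using z nu by (simp add: power_mult_distrib power_divide)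
      thus "z * (norm (K u) ^ 2 / norm u ^ 2) \<le> m" using Sup_ge[OF inS[OF wV nw]] by simp
    qed
    thus ?thesis using nu by (simp add: divide_le_eq mult.commute)
  qed
  have Anorm: "norm (A v) ^ 2 \<le> m * norm (K v) ^ 2" if vV: "v \<in> V" for v
  proof -
    define a where "a = A v"
    have aV: "a \<in> V" using V_inv[OF vV] by (simp add: a_def)
    have "norm a ^ 2 = inner (K v) (K a)" using A_inner[of v a] by (simp add: a_def power2_norm_eq_inner)
    also have "\<dots> \<le> norm (K v) * norm (K a)" by (rule norm_cauchy_schwarz)
    finally have h1: "norm a ^ 2 \<le> norm (K v) * norm (K a)" .
    have "(norm a ^ 2) ^ 2 \<le> (norm (K v) * norm (K a)) ^ 2"
      using h1 by (intro power_mono) auto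
    also have "\<dots> = norm (K v) ^ 2 * norm (K a) ^ 2" by (simp add: power_mult_distrib)
    also have "\<dots> \<le> norm (K v) ^ 2 * (m * norm a ^ 2)" by (intro mult_left_mono Qb aV) auto
    finally have h2: "norm a ^ 2 * norm a ^ 2 \<le> (m * norm (K v) ^ 2) * norm a ^ 2"
      by (simp add: power2_eq_square algebra_simps)
    show ?thesis
    proof (cases "a = 0")
      case True thus ?thesis using mpos by (simp add: a_def)
    next
      case False
      hence "norm a ^ 2 > 0" by simp
      from mult_right_le_imp_le[OF h2 this] show ?thesis by (simp only: a_def)
    qed
  qed
  have "\<exists>v. v \<in> V \<and> norm v < 1 \<and> m - 1 / Suc n < norm (K v) ^ 2" for n
  proof -
    have "m - 1 / Suc n < m" by simp
    then obtain q where "q \<in> S" "m - 1 / Suc n < q" using less_cSupE[OF _ Sne] unfolding m_def by blast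
    thus ?thesis by (auto simp: S_def)
  qed
  then obtain v where vV: "\<And>n. v n \<in> V" and vn: "\<And>n. norm (v n) < 1"
    and vQ: "\<And>n. m - 1 / Suc n < norm (K (v n)) ^ 2" by metis
  have vQle: "norm (K (v n)) ^ 2 \<le> m" for n using Sup_ge[OF inS[OF vV vn]] .
  have dist1: "norm (A (v n) - m *\<^sub>R v n) ^ 2 \<le> m / Suc n" for n
  proof -
    have "norm (A (v n) - m *\<^sub>R v n) ^ 2
        = norm (A (v n)) ^ 2 - 2 * m * inner (A (v n)) (v n) + m^2 * norm (v n) ^ 2"
      unfolding power2_norm_eq_inner
      by (simp add: inner_diff_left inner_diff_right inner_commute algebra_simps power2_eq_square)
    also have "inner (A (v n)) (v n) = norm (K (v n)) ^ 2" by (rule A_quad)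
    also have "m^2 * norm (v n) ^ 2 \<le> m^2 * 1"
      using vn[of n] by (intro mult_left_mono) (auto simp: power_le_one)
    hence "norm (A (v n)) ^ 2 - 2 * m * norm (K (v n)) ^ 2 + m^2 * norm (v n) ^ 2
           \<le> m * norm (K (v n)) ^ 2 - 2 * m * norm (K (v n)) ^ 2 + m^2"
      using Anorm[OF vV[of n]] by simp
    also have "\<dots> = m * (m - norm (K (v n)) ^ 2)" by (simp add: power2_eq_square algebra_simps)
    also have "\<dots> \<le> m * (1 / Suc n)" using vQ[of n] mpos by (intro mult_left_mono) auto
    finally show ?thesis by simp
  qed
  define Cset where "Cset = adjoint K ` closure (K ` ball 0 1)"
  have cC: "compact Cset" unfolding Cset_def
    using cK unfolding compact_op_def
    by (intro compact_continuous_image linear_continuous_on blKs) auto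
  have inC: "A (v n) \<in> Cset" for n
  proof -
    have "K (v n) \<in> closure (K ` ball 0 1)" using vn[of n] by (intro closure_subset[THEN subsetD]) auto
    thus ?thesis by (simp add: Cset_def)
  qed
  have "\<forall>n. A (v n) \<in> Cset" using inC by blast
  from seq_compactE[OF compact_imp_seq_compact[OF cC] this]
  obtain y r where rmono: "strict_mono r" and ylim0: "((\<lambda>n. A (v n)) \<circ> r) \<longlonglongrightarrow> y" by blast
  have ylim: "(\<lambda>n. A (v (r n))) \<longlonglongrightarrow> y" using ylim0 by (simp add: comp_def)
  define D where "D n = A (v (r n)) - m *\<^sub>R v (r n)" for n
  have Dbound: "norm (D n) \<le> sqrt (m * inverse (Suc n))" for n
  proof -
    have "norm (D n) ^ 2 \<le> m / Suc (r n)" unfolding D_def by (rule dist1)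
    also have "\<dots> \<le> m / Suc n" using seq_suble[OF rmono, of n] mpos
      by (intro divide_left_mono) auto
    finally have "norm (D n) ^ 2 \<le> m * inverse (Suc n)" by (simp add: field_simps)
    thus ?thesis by (rule real_le_rsqrt)
  qed
  have "(\<lambda>n. m * inverse (real (Suc n))) \<longlonglongrightarrow> m * 0"
    by (intro tendsto_mult tendsto_const LIMSEQ_inverse_real_of_nat)
  hence "(\<lambda>n. sqrt (m * inverse (real (Suc n)))) \<longlonglongrightarrow> sqrt (m * 0)"
    by (rule tendsto_real_sqrt)
  hence "(\<lambda>n. sqrt (m * inverse (real (Suc n)))) \<longlonglongrightarrow> 0" by simp
  hence D0: "D \<longlonglongrightarrow> 0"
    by (intro Lim_null_comparison[of D] always_eventually allI) (use Dbound in auto)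
  have "(\<lambda>n. A (v (r n)) - D n) \<longlonglongrightarrow> y - 0" by (intro tendsto_intros ylim D0)
  hence "(\<lambda>n. m *\<^sub>R v (r n)) \<longlonglongrightarrow> y" by (simp add: D_def)
  hence "(\<lambda>n. (1/m) *\<^sub>R (m *\<^sub>R v (r n))) \<longlonglongrightarrow> (1/m) *\<^sub>R y" by (intro tendsto_intros)
  hence vlim: "(\<lambda>n. v (r n)) \<longlonglongrightarrow> (1/m) *\<^sub>R y" using mpos by simp
  define e where "e = (1/m) *\<^sub>R y"
  have eV: "e \<in> V" using V_closed vV vlim unfolding e_def
    by (metis closed_sequentially)
  have "(\<lambda>n. A (v (r n))) \<longlonglongrightarrow> A e"
    using bounded_linear.tendsto[OF blA vlim] by (simp add: e_def)
  hence Ae: "A e = y" using ylim LIMSEQ_unique by blast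
  hence Ae2: "A e = m *\<^sub>R e" using mpos by (simp add: e_def)
  have Qlim: "(\<lambda>n. norm (K (v (r n))) ^ 2) \<longlonglongrightarrow> norm (K e) ^ 2"
    by (intro tendsto_intros bounded_linear.tendsto[OF blK] vlim[folded e_def])
  have "(\<lambda>n. norm (K (v (r n))) ^ 2) \<longlonglongrightarrow> m"
  proof (rule tendsto_sandwich[where f="\<lambda>n. m - 1 / Suc n" and h="\<lambda>n. m"])
    show "\<forall>\<^sub>F n in sequentially. m - 1 / Suc n \<le> norm (K (v (r n))) ^ 2"
    proof (intro always_eventually allI)
      fix n
      have "1 / Suc (r n) \<le> 1 / Suc n" using seq_suble[OF rmono, of n] by (intro divide_left_mono) auto
      thus "m - 1 / Suc n \<le> norm (K (v (r n))) ^ 2" using vQ[of "r n"] by linarith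
    qed
    show "\<forall>\<^sub>F n in sequentially. norm (K (v (r n))) ^ 2 \<le> m" using vQle by simp
    show "(\<lambda>n. m - 1 / real (Suc n)) \<longlonglongrightarrow> m"
      using tendsto_diff[OF tendsto_const[of m] LIMSEQ_Suc[OF lim_inverse_n']] by simp
  qed simp
  hence "norm (K e) ^ 2 = m" using Qlim LIMSEQ_unique by blast
  hence "e \<noteq> 0" using mpos K0 by auto
  hence "m \<in> Lam" using mpos Ae2 by (auto simp: Lam_def)
  moreover have "e \<in> E m" using Ae2 by (simp add: E_def)
  ultimately have "inner e e = 0" using eV by (simp add: V_def)
  thus False using \<open>e \<noteq> 0\<close> by simp
qed

end

context cop begin

lemma bnd1: "bnd (\<lambda>_. 1) 1" by (simp add: bnd_def)

lemma bnd_id: "bnd (\<lambda>l. l) ((onorm K)^2)"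
  unfolding bnd_def by (metis Lam_le Lam_pos abs_of_pos zero_le_power2)

lemma decomp: "A (x - Phi (\<lambda>_. 1) x) = 0"
proof (rule V_ker)
  show "x - Phi (\<lambda>_. 1) x \<in> V" unfolding V_def
  proof (intro CollectI ballI)
    fix l s assume l: "l \<in> Lam" and s: "s \<in> E l"
    have "inner (Phi (\<lambda>_. 1) x) s = inner (Phi (\<lambda>_. 1) x) (P l s)" using P_idem[OF s] by simp
    also have "\<dots> = inner (P l (Phi (\<lambda>_. 1) x)) s" by (simp add: P_inner)
    also have "\<dots> = inner (P l x) s" using P_Phi[OF bnd1 l] by simp
    also have "\<dots> = inner x s" using P_idem[OF s] by (simp add: P_inner)
    finally show "inner (x - Phi (\<lambda>_. 1) x) s = 0" by (simp add: inner_diff_left)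
  qed
qed

lemma A_add: "A (x + y) = A x + A y"
proof - interpret bounded_linear A by (rule blA) show ?thesis by (rule add) qed

lemma A_diff: "A (x - y) = A x - A y"
proof - interpret bounded_linear A by (rule blA) show ?thesis by (rule diff) qed

lemma A_Phi: "A x = Phi (\<lambda>l. l) x"
proof -
  have "A x = A (Phi (\<lambda>_. 1) x)" by (metis A_diff decomp eq_iff_diff_eq_0)
  moreover have "((\<lambda>l. A (1 *\<^sub>R P l x)) has_sum A (Phi (\<lambda>_. 1) x)) Lam"
    by (rule has_sum_bounded_linear[OF blA Phi_has[OF bnd1]])
  moreover have "(\<lambda>l. A (1 *\<^sub>R P l x)) = (\<lambda>l. l *\<^sub>R P l x)" using AP by simp
  ultimately show ?thesis unfolding Phi_def by (simp add: infsumI)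
qed

lemma fun_calc_Phi:
  assumes "bnd h B"
  shows "fun_calc h A = Phi h"
  unfolding fun_calc_def
proof (rule the_equality)
  show "bounded_linear (Phi h) \<and>
    (\<forall>x l. 0 < l \<longrightarrow> A x = l *\<^sub>R x \<longrightarrow> Phi h x = h l *\<^sub>R x) \<and>
    (\<forall>x. A x = 0 \<longrightarrow> Phi h x = 0)"
  proof (intro conjI allI impI)
    show "bounded_linear (Phi h)" by (rule bl_Phi[OF assms])
  next
    fix x l assume l: "0 < l" and Ax: "A x = l *\<^sub>R x"
    show "Phi h x = h l *\<^sub>R x"
    proof (cases "x = 0")
      case True
      have "A 0 = 0" by (simp add: K0 Ks0)
      from Phi_ker[OF this] True show ?thesis by simp
    next
      case False
      hence "l \<in> Lam" using l Ax by (auto simp: Lam_def)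
      moreover have "x \<in> E l" using Ax by (simp add: E_def)
      ultimately show ?thesis by (rule Phi_eig)
    qed
  next
    fix x assume "A x = 0" thus "Phi h x = 0" by (rule Phi_ker)
  qed
next
  fix T assume T: "bounded_linear T \<and>
    (\<forall>x l. 0 < l \<longrightarrow> A x = l *\<^sub>R x \<longrightarrow> T x = h l *\<^sub>R x) \<and>
    (\<forall>x. A x = 0 \<longrightarrow> T x = 0)"
  hence blT: "bounded_linear T" by blast
  show "T = Phi h"
  proof
    fix x
    define r where "r = x - Phi (\<lambda>_. 1) x"
    have Tr: "T r = 0" using T decomp[of x] by (simp add: r_def)
    have "T x = T (Phi (\<lambda>_. 1) x) + T r"
      using linear_add[OF bounded_linear.linear[OF blT], of "Phi (\<lambda>_. 1) x" r] by (simp add: r_def)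
    hence Tx: "T x = T (Phi (\<lambda>_. 1) x)" using Tr by simp
    have "((\<lambda>l. T (1 *\<^sub>R P l x)) has_sum T (Phi (\<lambda>_. 1) x)) Lam"
      by (rule has_sum_bounded_linear[OF blT Phi_has[OF bnd1]])
    moreover have "\<And>l. l \<in> Lam \<Longrightarrow> T (1 *\<^sub>R P l x) = h l *\<^sub>R P l x"
      using T AP Lam_pos by simp
    ultimately have "((\<lambda>l. h l *\<^sub>R P l x) has_sum T (Phi (\<lambda>_. 1) x)) Lam"
      using has_sum_cong by (metis (no_types, lifting))
    from has_sum_unique[OF this Phi_has[OF assms]] show "T x = Phi h x" using Tx by simp
  qed
qed

end

context cop begin

lemma bnd_mult: "bnd a B1 \<Longrightarrow> bnd b B2 \<Longrightarrow> bnd (\<lambda>l. a l * b l) (B1 * B2)"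
  unfolding bnd_def by (auto simp: abs_mult intro!: mult_mono)

lemma bnd_of: "(\<forall>l\<in>Lam. \<bar>h l\<bar> \<le> B) \<Longrightarrow> 0 \<le> B \<Longrightarrow> bnd h B"
  by (simp add: bnd_def)

lemma bias_bound:
  assumes bh: "bnd h B" and bg: "bnd g G" and c: "\<forall>l\<in>Lam. \<bar>h l * (l * g l) - g l\<bar> \<le> c" "0 \<le> c"
  shows "norm (Phi h (A (Phi g w)) - Phi g w) \<le> c * norm w"
proof -
  have blg: "bnd (\<lambda>l. l * g l) ((onorm K)^2 * G)" using bnd_mult[OF bnd_id bg] .
  have "A (Phi g w) = Phi (\<lambda>l. l * g l) w" using A_Phi Phi_comp[OF bg] by simp
  hence "Phi h (A (Phi g w)) = Phi (\<lambda>l. h l * (l * g l)) w" using Phi_comp[OF blg] by simp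
  hence "Phi h (A (Phi g w)) - Phi g w = Phi (\<lambda>l. h l * (l * g l) - g l) w"
    using Phi_diff[OF bnd_mult[OF bh blg] bg] by simp
  also have "norm \<dots> \<le> c * norm w" by (rule Phi_norm) (use c in \<open>simp add: bnd_def\<close>)
  finally show ?thesis .
qed

lemma adj': "inner (adjoint K v) z = inner v (K z)"
  by (metis adj inner_commute)

lemma var_bound:
  assumes bh: "bnd h B" and bS: "bnd (\<lambda>l. h l * (l * h l)) S"
  shows "norm (Phi h (adjoint K v)) \<le> sqrt S * norm v"
proof -
  define u where "u = Phi h (adjoint K v)"
  have S0: "0 \<le> S" using bS by (simp add: bnd_def)
  have blh: "bnd (\<lambda>l. l * h l) ((onorm K)^2 * B)" using bnd_mult[OF bnd_id bh] .
  have "norm u ^ 2 = inner (Phi h (adjoint K v)) u" by (simp add: u_def power2_norm_eq_inner)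
  also have "\<dots> = inner (adjoint K v) (Phi h u)" by (rule Phi_selfadj[OF bh])
  also have "\<dots> = inner v (K (Phi h u))" by (rule adj')
  also have "\<dots> \<le> norm v * norm (K (Phi h u))" by (rule norm_cauchy_schwarz)
  finally have h1: "norm u ^ 2 \<le> norm v * norm (K (Phi h u))" .
  have "norm (K (Phi h u)) ^ 2 = inner (A (Phi h u)) (Phi h u)" by (rule A_quad[symmetric])
  also have "A (Phi h u) = Phi (\<lambda>l. l * h l) u" using A_Phi Phi_comp[OF bh] by simp
  also have "inner (Phi (\<lambda>l. l * h l) u) (Phi h u) = inner (Phi h (Phi (\<lambda>l. l * h l) u)) u"
    by (simp add: Phi_selfadj[OF bh] inner_commute)
  also have "Phi h (Phi (\<lambda>l. l * h l) u) = Phi (\<lambda>l. h l * (l * h l)) u" by (rule Phi_comp[OF blh])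
  also have "inner (Phi (\<lambda>l. h l * (l * h l)) u) u \<le> norm (Phi (\<lambda>l. h l * (l * h l)) u) * norm u"
    by (rule norm_cauchy_schwarz)
  also have "\<dots> \<le> (S * norm u) * norm u" by (intro mult_right_mono Phi_norm[OF bS]) auto
  finally have "norm (K (Phi h u)) ^ 2 \<le> S * norm u * norm u" .
  moreover have "(sqrt S * norm u) ^ 2 = S * norm u * norm u"
    using S0 by (simp add: power_mult_distrib power2_eq_square[of "norm u"])
  ultimately have "norm (K (Phi h u)) ^ 2 \<le> (sqrt S * norm u) ^ 2" by simp
  hence h2: "norm (K (Phi h u)) \<le> sqrt S * norm u"
    by (rule power2_le_imp_le) (use S0 in simp)
  have "norm u * norm u \<le> (sqrt S * norm v) * norm u"
    using order.trans[OF h1 mult_left_mono[OF h2, of "norm v"]] by (simp add: power2_eq_square algebra_simps)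
  thus ?thesis
  proof (cases "norm u = 0")
    case True thus ?thesis using S0 by (simp add: u_def)
  next
    case False
    hence "norm u > 0" by simp
    from mult_right_le_imp_le[OF \<open>norm u * norm u \<le> _\<close> this] show ?thesis by (simp add: u_def)
  qed
qed

lemma Ks_orth: "z \<in> orth_compl (range K) \<Longrightarrow> adjoint K z = 0"
proof -
  assume "z \<in> orth_compl (range K)"
  hence "inner z (K (adjoint K z)) = 0" by (simp add: orth_compl_def)
  hence "inner (adjoint K z) (adjoint K z) = 0" by (simp add: adj')
  thus ?thesis by simp
qed

lemma mp_char:
  assumes "yh \<in> mp_domain K"
  shows "mp_inverse K yh \<in> orth_compl {v. K v = 0} \<and>
         (\<exists>z \<in> orth_compl (range K). yh = K (mp_inverse K yh) + z)"
proof -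
  interpret bounded_linear K by (rule blK)
  define N where "N = {v. K v = 0}"
  have subN: "subspace N" unfolding N_def subspace_def by (auto simp: add scale)
  have clN: "closed N" unfolding N_def
    by (intro closed_Collect_eq continuous_on_const linear_continuous_on blK)
  obtain x0 z0 where y: "yh = K x0 + z0" and z0: "z0 \<in> orth_compl (range K)"
    using assms by (auto simp: mp_domain_def)
  obtain p where pN: "p \<in> N" and orth: "\<And>s. s \<in> N \<Longrightarrow> inner (x0 - p) s = 0"
    using proj_exists[OF subN clN, of x0] by blast
  have ex: "(x0 - p) \<in> orth_compl N \<and> (\<exists>z \<in> orth_compl (range K). yh = K (x0 - p) + z)"
    using orth pN y z0 by (auto simp: orth_compl_def N_def diff)
  have un: "x1 = x2" if "x1 \<in> orth_compl N \<and> (\<exists>z \<in> orth_compl (range K). yh = K x1 + z)"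
    "x2 \<in> orth_compl N \<and> (\<exists>z \<in> orth_compl (range K). yh = K x2 + z)" for x1 x2
  proof -
    from that(1) obtain z1 where z1: "z1 \<in> orth_compl (range K)" "yh = K x1 + z1" by blast
    from that(2) obtain z2 where z2: "z2 \<in> orth_compl (range K)" "yh = K x2 + z2" by blast
    have "K (x1 - x2) = z2 - z1" using z1 z2 by (simp add: diff algebra_simps)
    moreover have "inner (z2 - z1) (K (x1 - x2)) = 0"
      using z1(1) z2(1) by (simp add: orth_compl_def inner_diff_left)
    ultimately have "K (x1 - x2) = 0" by simp
    hence "x1 - x2 \<in> N" by (simp add: N_def)
    moreover have "x1 - x2 \<in> orth_compl N" using that
      by (auto simp: orth_compl_def inner_diff_left)
    ultimately have "inner (x1 - x2) (x1 - x2) = 0" by (simp add: orth_compl_def)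
    thus ?thesis by simp
  qed
  have "\<exists>!x. x \<in> orth_compl N \<and> (\<exists>z \<in> orth_compl (range K). yh = K x + z)"
    using ex un by blast
  from theI'[OF this] show ?thesis unfolding mp_inverse_def N_def by simp
qed

lemma Ks_yhat:
  assumes "yh \<in> mp_domain K"
  shows "adjoint K yh = A (mp_inverse K yh)"
proof -
  obtain z where z: "z \<in> orth_compl (range K)" "yh = K (mp_inverse K yh) + z"
    using mp_char[OF assms] by blast
  have "adjoint K yh = adjoint K (K (mp_inverse K yh)) + adjoint K z"
  proof -
    interpret bounded_linear "adjoint K" by (rule blKs)
    have e: "adjoint K yh = adjoint K (K (mp_inverse K yh) + z)" using z(2) by (rule arg_cong)
    show ?thesis unfolding e by (rule add)
  qed
  thus ?thesis using Ks_orth[OF z(1)] by simp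
qed

end

context prob_space begin

lemma sq_bound_aux:
  fixes a b :: "'y::real_inner"
  shows "norm (a - b) ^ 2 \<le> 2 * norm a ^ 2 + 2 * norm b ^ 2"
proof -
  have "norm (a - b) \<le> norm a + norm b" by (rule norm_triangle_ineq4)
  hence "norm (a - b) ^ 2 \<le> (norm a + norm b) ^ 2" by (intro power_mono) auto
  also have "\<dots> \<le> 2 * norm a ^ 2 + 2 * norm b ^ 2"
    using sum_squares_ge_zero[of "norm a - norm b" 0] by (simp add: power2_eq_square algebra_simps)
  finally show ?thesis .
qed

lemma inner_bound_aux:
  fixes a b :: "'y::real_inner"
  shows "\<bar>inner a b\<bar> \<le> norm a ^ 2 + norm b ^ 2"
proof -
  have "\<bar>inner a b\<bar> \<le> norm a * norm b" by (rule Cauchy_Schwarz_ineq2)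
  also have "\<dots> \<le> norm a ^ 2 + norm b ^ 2"
  proof -
    have "2 * (norm a * norm b) \<le> norm a ^ 2 + norm b ^ 2"
      using sum_squares_ge_zero[of "norm a - norm b" 0] by (simp add: power2_eq_square algebra_simps)
    moreover have "0 \<le> norm a * norm b" by simp
    ultimately show ?thesis by linarith
  qed
  finally show ?thesis .
qed

lemma mean_sq:
  fixes Y :: "nat \<Rightarrow> 'a \<Rightarrow> 'y::{real_inner, complete_space, second_countable_topology}"
  assumes ind: "indep_vars (\<lambda>_. borel) Y UNIV"
    and dist: "\<forall>i. distr M borel (Y i) = distr M borel (Y 0)"
    and int0: "integrable M (Y 0)" and mean: "integral\<^sup>L M (Y 0) = yhat"
    and fin: "(\<integral>\<^sup>+ \<omega>. ennreal ((norm (Y 0 \<omega>))\<^sup>2) \<partial>M) < \<infinity>"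
    and n: "n \<ge> 1"
  shows "integrable M (\<lambda>\<omega>. (norm ((1 / real n) *\<^sub>R (\<Sum>i<n. Y i \<omega>) - yhat))\<^sup>2) \<and>
         integral\<^sup>L M (\<lambda>\<omega>. (norm ((1 / real n) *\<^sub>R (\<Sum>i<n. Y i \<omega>) - yhat))\<^sup>2)
           = integral\<^sup>L M (\<lambda>\<omega>. (norm (Y 0 \<omega> - yhat))\<^sup>2) / real n"
proof -
  define \<sigma>2 where "\<sigma>2 = integral\<^sup>L M (\<lambda>\<omega>. (norm (Y 0 \<omega> - yhat))\<^sup>2)"
  have meas[measurable]: "Y i \<in> borel_measurable M" for i
    using ind unfolding indep_vars_def2 by auto
  have sq0: "integrable M (\<lambda>\<omega>. (norm (Y 0 \<omega>))\<^sup>2)"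
    by (rule integrableI_bounded) (use fin in auto)
  have sqc0: "integrable M (\<lambda>\<omega>. (norm (Y 0 \<omega> - yhat))\<^sup>2)"
  proof (rule Bochner_Integration.integrable_bound[where f="\<lambda>\<omega>. 2 * (norm (Y 0 \<omega>))\<^sup>2 + 2 * (norm yhat)\<^sup>2"])
    show "integrable M (\<lambda>\<omega>. 2 * (norm (Y 0 \<omega>))\<^sup>2 + 2 * (norm yhat)\<^sup>2)"
      using sq0 by (intro Bochner_Integration.integrable_add integrable_mult_right) auto
    show "AE \<omega> in M. norm ((norm (Y 0 \<omega> - yhat))\<^sup>2) \<le> norm (2 * (norm (Y 0 \<omega>))\<^sup>2 + 2 * (norm yhat)\<^sup>2)"
      using sq_bound_aux by (intro AE_I2) auto
  qed measurable
  define f where "f = (\<lambda>y::'y. (norm (y - yhat))\<^sup>2)"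
  have f_meas[measurable]: "f \<in> borel_measurable borel" unfolding f_def by measurable
  have sqc: "integrable M (\<lambda>\<omega>. (norm (Y i \<omega> - yhat))\<^sup>2) \<and>
             integral\<^sup>L M (\<lambda>\<omega>. (norm (Y i \<omega> - yhat))\<^sup>2) = \<sigma>2" for i
  proof -
    have "integrable (distr M borel (Y 0)) f" using sqc0 by (subst integrable_distr_eq) (auto simp: f_def)
    hence "integrable (distr M borel (Y i)) f" using dist[rule_format, of i] by simp
    hence I: "integrable M (\<lambda>\<omega>. f (Y i \<omega>))" by (subst (asm) integrable_distr_eq) auto
    have "integral\<^sup>L M (\<lambda>\<omega>. f (Y i \<omega>)) = integral\<^sup>L (distr M borel (Y i)) f"
      by (rule integral_distr[symmetric]) auto
    also have "\<dots> = integral\<^sup>L (distr M borel (Y 0)) f" using dist[rule_format, of i] by simp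
    also have "\<dots> = \<sigma>2" by (subst integral_distr) (auto simp: f_def \<sigma>2_def)
    finally show ?thesis using I by (simp add: f_def)
  qed
  have intY: "integrable M (\<lambda>\<omega>. inner c (Y i \<omega>)) \<and> integral\<^sup>L M (\<lambda>\<omega>. inner c (Y i \<omega>)) = inner c yhat" for i c
  proof -
    define g where "g = (\<lambda>y::'y. inner c y)"
    have g_meas[measurable]: "g \<in> borel_measurable borel" unfolding g_def by measurable
    have I0: "integrable M (\<lambda>\<omega>. g (Y 0 \<omega>))" unfolding g_def
      by (rule integrable_bounded_linear[OF bounded_linear_inner_right int0])
    have E0: "integral\<^sup>L M (\<lambda>\<omega>. g (Y 0 \<omega>)) = inner c yhat" unfolding g_def
      using integral_inner_right[of c M "Y 0"] int0 mean by simp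
    have "integrable (distr M borel (Y 0)) g" using I0 by (subst integrable_distr_eq) auto
    hence "integrable (distr M borel (Y i)) g" using dist[rule_format, of i] by simp
    hence I: "integrable M (\<lambda>\<omega>. g (Y i \<omega>))" by (subst (asm) integrable_distr_eq) auto
    have "integral\<^sup>L M (\<lambda>\<omega>. g (Y i \<omega>)) = integral\<^sup>L (distr M borel (Y i)) g"
      by (rule integral_distr[symmetric]) auto
    also have "\<dots> = integral\<^sup>L (distr M borel (Y 0)) g" using dist[rule_format, of i] by simp
    also have "\<dots> = inner c yhat" using E0 by (subst integral_distr) auto
    finally show ?thesis using I by (simp add: g_def)
  qed
  define G where "G = (\<lambda>p::'y \<times> 'y. inner (fst p - yhat) (snd p - yhat))"
  have G_meas[measurable]: "G \<in> borel_measurable (borel \<Otimes>\<^sub>M borel)" unfolding G_def by measurable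
  have cross_int: "integrable M (\<lambda>\<omega>. inner (Y i \<omega> - yhat) (Y j \<omega> - yhat))" for i j
  proof (rule Bochner_Integration.integrable_bound[where f="\<lambda>\<omega>. (norm (Y i \<omega> - yhat))\<^sup>2 + (norm (Y j \<omega> - yhat))\<^sup>2"])
    show "integrable M (\<lambda>\<omega>. (norm (Y i \<omega> - yhat))\<^sup>2 + (norm (Y j \<omega> - yhat))\<^sup>2)"
      using sqc by (intro Bochner_Integration.integrable_add) auto
    show "AE \<omega> in M. norm (inner (Y i \<omega> - yhat) (Y j \<omega> - yhat))
             \<le> norm ((norm (Y i \<omega> - yhat))\<^sup>2 + (norm (Y j \<omega> - yhat))\<^sup>2)"
      using inner_bound_aux by (intro AE_I2) auto
  qed measurable
  have cross0: "integral\<^sup>L M (\<lambda>\<omega>. inner (Y i \<omega> - yhat) (Y j \<omega> - yhat)) = 0" if ij: "i \<noteq> j" for i j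
  proof -
    have "indep_var borel ((\<lambda>f. f i) \<circ> (\<lambda>\<omega>. restrict (\<lambda>k. Y k \<omega>) {i}))
                    borel ((\<lambda>f. f j) \<circ> (\<lambda>\<omega>. restrict (\<lambda>k. Y k \<omega>) {j}))"
      using ij by (intro indep_var_compose[OF indep_var_restrict[OF ind]]) auto
    also have "((\<lambda>f. f i) \<circ> (\<lambda>\<omega>. restrict (\<lambda>k. Y k \<omega>) {i})) = Y i" by auto
    also have "((\<lambda>f. f j) \<circ> (\<lambda>\<omega>. restrict (\<lambda>k. Y k \<omega>) {j})) = Y j" by auto
    finally have iv: "indep_var borel (Y i) borel (Y j)" .
    define Mi where "Mi = distr M borel (Y i)"
    define Mj where "Mj = distr M borel (Y j)"
    have prodeq: "Mi \<Otimes>\<^sub>M Mj = distr M (borel \<Otimes>\<^sub>M borel) (\<lambda>\<omega>. (Y i \<omega>, Y j \<omega>))"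
      using iv unfolding indep_var_distribution_eq Mi_def Mj_def by blast
    interpret Mi: prob_space Mi unfolding Mi_def by (rule prob_space_distr) simp
    interpret Mj: prob_space Mj unfolding Mj_def by (rule prob_space_distr) simp
    interpret MM: pair_prob_space Mi Mj ..
    have "integral\<^sup>L M (\<lambda>\<omega>. inner (Y i \<omega> - yhat) (Y j \<omega> - yhat))
          = integral\<^sup>L M (\<lambda>\<omega>. G (Y i \<omega>, Y j \<omega>))" by (simp add: G_def)
    also have "\<dots> = integral\<^sup>L (distr M (borel \<Otimes>\<^sub>M borel) (\<lambda>\<omega>. (Y i \<omega>, Y j \<omega>))) G"
      by (rule integral_distr[symmetric]) auto
    also have "\<dots> = integral\<^sup>L (Mi \<Otimes>\<^sub>M Mj) G" by (simp add: prodeq)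
    also have "\<dots> = (\<integral>x. (\<integral>y. G (x, y) \<partial>Mj) \<partial>Mi)"
    proof (rule MM.integral_fst'[symmetric])
      show "integrable (Mi \<Otimes>\<^sub>M Mj) G" unfolding prodeq
        using cross_int[of i j] by (subst integrable_distr_eq) (auto simp: G_def)
    qed
    also have "\<dots> = (\<integral>x. 0 \<partial>Mi)"
    proof (rule Bochner_Integration.integral_cong[OF refl])
      fix x
      define g where "g = (\<lambda>y::'y. inner (x - yhat) y)"
      have g_meas[measurable]: "g \<in> borel_measurable borel" unfolding g_def by measurable
      have Ij: "integrable Mj g" unfolding Mj_def using intY[of "x - yhat" j]
        by (subst integrable_distr_eq) (auto simp: g_def)
      have Ej: "integral\<^sup>L Mj g = inner (x - yhat) yhat" unfolding Mj_def using intY[of "x - yhat" j]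
        by (subst integral_distr) (auto simp: g_def)
      have "(\<integral>y. G (x, y) \<partial>Mj) = (\<integral>y. g y - inner (x - yhat) yhat \<partial>Mj)"
        by (simp add: G_def g_def inner_diff_right)
      also have "\<dots> = integral\<^sup>L Mj g - inner (x - yhat) yhat"
        using Ij by (subst Bochner_Integration.integral_diff) (auto simp: Mj.prob_space)
      also have "\<dots> = 0" using Ej by simp
      finally show "(\<integral>y. G (x, y) \<partial>Mj) = 0" by simp
    qed
    also have "\<dots> = 0" by simp
    finally show ?thesis .
  qed
  have termval: "integral\<^sup>L M (\<lambda>\<omega>. inner (Y i \<omega> - yhat) (Y j \<omega> - yhat)) = (if i = j then \<sigma>2 else 0)" for i j
    using sqc[of i] cross0[of i j] by (auto simp: power2_norm_eq_inner)
  define S where "S = (\<lambda>\<omega>. \<Sum>i<n. (Y i \<omega> - yhat))"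
  have Sexp: "(norm (S \<omega>))\<^sup>2 = (\<Sum>j<n. \<Sum>i<n. inner (Y i \<omega> - yhat) (Y j \<omega> - yhat))" for \<omega>
    by (simp add: S_def power2_norm_eq_inner inner_sum_left inner_sum_right)
  have Sint: "integrable M (\<lambda>\<omega>. (norm (S \<omega>))\<^sup>2)"
    unfolding Sexp by (intro Bochner_Integration.integrable_sum cross_int)
  have "integral\<^sup>L M (\<lambda>\<omega>. (norm (S \<omega>))\<^sup>2)
        = (\<Sum>j<n. \<Sum>i<n. integral\<^sup>L M (\<lambda>\<omega>. inner (Y i \<omega> - yhat) (Y j \<omega> - yhat)))"
    unfolding Sexp
    by (simp add: Bochner_Integration.integral_sum Bochner_Integration.integrable_sum cross_int)
  also have "\<dots> = (\<Sum>j<n. \<Sum>i<n. (if i = j then \<sigma>2 else 0))" by (simp add: termval)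
  also have "\<dots> = real n * \<sigma>2" by simp
  finally have Sval: "integral\<^sup>L M (\<lambda>\<omega>. (norm (S \<omega>))\<^sup>2) = real n * \<sigma>2" .
  have npos: "real n > 0" using n by simp
  have eq: "(norm ((1 / real n) *\<^sub>R (\<Sum>i<n. Y i \<omega>) - yhat))\<^sup>2 = (1 / real n)^2 * (norm (S \<omega>))\<^sup>2" for \<omega>
  proof -
    have "S \<omega> = (\<Sum>i<n. Y i \<omega>) - real n *\<^sub>R yhat" by (simp add: S_def sum_subtractf sum_constant_scaleR)
    hence "(\<Sum>i<n. Y i \<omega>) = S \<omega> + real n *\<^sub>R yhat" by simp
    hence "(1 / real n) *\<^sub>R (\<Sum>i<n. Y i \<omega>) = (1 / real n) *\<^sub>R S \<omega> + ((1 / real n) * real n) *\<^sub>R yhat"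
      by (simp add: scaleR_add_right)
    hence "(1 / real n) *\<^sub>R (\<Sum>i<n. Y i \<omega>) - yhat = (1 / real n) *\<^sub>R S \<omega>"
      using npos by simp
    thus ?thesis by (simp add: power_mult_distrib power_divide)
  qed
  show ?thesis unfolding eq
    using Sint Sval npos by (simp add: \<sigma>2_def power2_eq_square)
qed

end

lemma powr_alg1:
  fixes d r v :: real
  assumes d: "d > 0" and r: "r > 0" and v: "v > 0"
  shows "d^2 / ((d / r) powr (2/(v+1))) = d powr (2 * v/(v+1)) * r powr (2/(v+1))"
proof -
  have e1: "(d / r) powr (2/(v+1)) = d powr (2/(v+1)) / r powr (2/(v+1))"
    by (rule powr_divide)
  have e2: "d^2 = d powr 2" using d by (simp add: powr_numeral)
  have e3: "2 - 2/(v+1) = 2 * v/(v+1)" using v by (simp add: field_simps)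
  have e4: "d powr 2 / d powr (2/(v+1)) = d powr (2 * v/(v+1))"
    using d by (simp only: powr_diff[symmetric] e3)
  have "d^2 / ((d / r) powr (2/(v+1))) = (d powr 2 / d powr (2/(v+1))) * r powr (2/(v+1))"
    unfolding e1 e2 by (simp only: divide_divide_eq_right times_divide_eq_left)
  thus ?thesis unfolding e4 .
qed

lemma powr_alg2:
  fixes d r v :: real
  assumes d: "d > 0" and r: "r > 0" and v: "v > 0"
  shows "((d / r) powr (2/(v+1))) powr v * r^2 = d powr (2 * v/(v+1)) * r powr (2/(v+1))"
proof -
  have e0: "2/(v+1) * v = 2 * v/(v+1)" by simp
  have "((d / r) powr (2/(v+1))) powr v = (d / r) powr (2 * v/(v+1))"
    by (simp only: powr_powr e0)
  also have "\<dots> = d powr (2 * v/(v+1)) / r powr (2 * v/(v+1))"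
    by (rule powr_divide)
  finally have e: "((d / r) powr (2/(v+1))) powr v = d powr (2 * v/(v+1)) / r powr (2 * v/(v+1))" .
  have e2: "r^2 = r powr 2" using r by (simp add: powr_numeral)
  have e3: "2 - 2 * v/(v+1) = 2/(v+1)" using v by (simp add: field_simps)
  have e4: "r powr 2 / r powr (2 * v/(v+1)) = r powr (2/(v+1))"
    using r by (simp only: powr_diff[symmetric] e3)
  have "((d / r) powr (2/(v+1))) powr v * r^2 = d powr (2 * v/(v+1)) * (r powr 2 / r powr (2 * v/(v+1)))"
    unfolding e e2 by (simp only: times_divide_eq_left times_divide_eq_right mult.commute)
  thus ?thesis unfolding e4 .
qed

lemma powr_sq_aux:
  fixes d e :: real
  assumes d: "d > 0"
  shows "(d powr e)^2 = d powr (2 * e)"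
proof -
  have "(d powr e)^2 = (d powr e) powr 2" using d by (simp add: powr_numeral)
  also have "\<dots> = d powr (2 * e)" by (simp add: powr_powr mult.commute)
  finally show ?thesis .
qed

lemma powr_alg3:
  fixes d r v :: real
  assumes d: "d > 0" and r: "r > 0" and v: "v > 0"
  shows "sqrt (d powr (2 * v/(v+1)) * r powr (2/(v+1))) = d powr (v/(v+1)) * r powr (1/(v+1))"
proof -
  have "d powr (2 * v/(v+1)) = (d powr (v/(v+1)))^2"
    using powr_sq_aux[OF d, of "v/(v+1)"] by simp
  moreover have "r powr (2/(v+1)) = (r powr (1/(v+1)))^2"
    using powr_sq_aux[OF r, of "1/(v+1)"] by simp
  ultimately have "d powr (2 * v/(v+1)) * r powr (2/(v+1)) = (d powr (v/(v+1)) * r powr (1/(v+1)))^2"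
    by (simp add: power_mult_distrib)
  thus ?thesis by simp
qed

lemma filter_lF_bound:
  fixes F :: "real \<Rightarrow> real \<Rightarrow> real"
  assumes CR: "\<forall>a>0. \<forall>l\<in>{0<..L}. l * F a l < CR"
    and CF: "\<forall>a>0. \<forall>l\<in>{0<..L}. \<bar>F a l\<bar> \<le> CF / a"
    and Cv: "\<forall>a>0. \<forall>l\<in>{0<..L}. l powr (v/2) * \<bar>1 - l * F a l\<bar> \<le> Cv * a powr (v/2)"
    and v: "v > 0" and pos: "CF > 0" "Cv > 0" "CR > 0"
  shows "\<forall>a>0. \<forall>l\<in>{0<..L}. \<bar>l * F a l\<bar> \<le> max CR (max CF Cv)"
proof (intro allI impI ballI)
  fix a l :: real assume a: "a > 0" and l: "l \<in> {0<..L}"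
  hence l0: "l > 0" by simp
  show "\<bar>l * F a l\<bar> \<le> max CR (max CF Cv)"
  proof (cases "l * F a l \<ge> 0")
    case True thus ?thesis using CR a l by force
  next
    case False
    show ?thesis
    proof (cases "l \<le> a")
      case True
      have "\<bar>l * F a l\<bar> = l * \<bar>F a l\<bar>" using l0 by (simp add: abs_mult)
      also have "\<dots> \<le> l * (CF / a)" using CF a l l0 by (intro mult_left_mono) auto
      also have "\<dots> \<le> a * (CF / a)" using True pos a by (intro mult_right_mono) auto
      also have "\<dots> = CF" using a by simp
      finally show ?thesis by simp
    next
      case la: False
      have "l powr (v/2) * (1 + \<bar>l * F a l\<bar>) = l powr (v/2) * \<bar>1 - l * F a l\<bar>" using False by simp
      also have "\<dots> \<le> Cv * a powr (v/2)" using Cv a l by blast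
      also have "\<dots> \<le> Cv * l powr (v/2)" using la a v pos by (intro mult_left_mono powr_mono2) auto
      finally have "l powr (v/2) * (1 + \<bar>l * F a l\<bar>) \<le> l powr (v/2) * Cv" by (simp add: mult.commute)
      hence "1 + \<bar>l * F a l\<bar> \<le> Cv" using l0 by (simp add: mult_le_cancel_left_pos)
      thus ?thesis by simp
    qed
  qed
qed


theorem theorem2:
  fixes K :: "'x::{real_inner, complete_space, second_countable_topology} \<Rightarrow>
              'y::{real_inner, complete_space, second_countable_topology}"
    and M :: "'w measure"
    and Y :: "nat \<Rightarrow> 'w \<Rightarrow> 'y"
    and yhat :: 'y
    and F :: "real \<Rightarrow> real \<Rightarrow> real"
    and \<nu>\<^sub>0 :: ereal
    and \<nu> \<rho> c C :: real
    and \<alpha> :: "real \<Rightarrow> real"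
  assumes "compact_op K"
    and "prob_space M"
    and "prob_space.indep_vars M (\<lambda>_. borel) Y UNIV"
    and "\<forall>i. distr M borel (Y i) = distr M borel (Y 0)"
    and "integrable M (Y 0)" and "integral\<^sup>L M (Y 0) = yhat"
    and "yhat \<in> mp_domain K"
    and "0 < (\<integral>\<^sup>+ \<omega>. ennreal ((norm (Y 0 \<omega>))\<^sup>2) \<partial>M)"
    and "(\<integral>\<^sup>+ \<omega>. ennreal ((norm (Y 0 \<omega>))\<^sup>2) \<partial>M) < \<infinity>"
    and "regularising_filter F ((onorm K)\<^sup>2) \<nu>\<^sub>0"
    and "0 < \<nu>" and "ereal \<nu> \<le> \<nu>\<^sub>0" and "0 < \<rho>"
    and "\<exists>w. mp_inverse K yhat = fun_calc (\<lambda>l. l powr (\<nu>/2)) (adjoint K \<circ> K) w \<and> norm w \<le> \<rho>"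
    and "0 < c" and "c \<le> C"
    and "\<forall>n::nat. n \<ge> 1 \<longrightarrow>
           c * (real n powr (-1/2) / \<rho>) powr (2/(\<nu>+1)) \<le> \<alpha> (real n powr (-1/2)) \<and>
           \<alpha> (real n powr (-1/2)) \<le> C * (real n powr (-1/2) / \<rho>) powr (2/(\<nu>+1))"
  shows "\<exists>C'. \<forall>n::nat. n \<ge> 1 \<longrightarrow>
     (\<integral>\<^sup>+ \<omega>. ennreal ((norm (
         (fun_calc (F (\<alpha> (real n powr (-1/2)))) (adjoint K \<circ> K) \<circ> adjoint K)
            ((1 / real n) *\<^sub>R (\<Sum>i<n. Y i \<omega>))
         - mp_inverse K yhat))\<^sup>2) \<partial>M) < \<infinity> \<and>
     sqrt (\<integral>\<omega>. (norm (
         (fun_calc (F (\<alpha> (real n powr (-1/2)))) (adjoint K \<circ> K) \<circ> adjoint K)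
            ((1 / real n) *\<^sub>R (\<Sum>i<n. Y i \<omega>))
         - mp_inverse K yhat))\<^sup>2 \<partial>M)
       \<le> C' * (real n powr (-1/2)) powr (\<nu>/(\<nu>+1)) * \<rho> powr (1/(\<nu>+1))"
proof -
  interpret cop K by unfold_locales (rule assms(1))
  interpret prob_space M by (rule assms(2))
  define L where "L = (onorm K)^2"
  have L0: "0 \<le> L" by (simp add: L_def)
  have RF: "regularising_filter F L \<nu>\<^sub>0" using assms(10) by (simp add: L_def)
  from RF have Fb: "\<forall>a>0. \<exists>B. \<forall>l\<in>{0<..L}. \<bar>F a l\<bar> \<le> B"
    by (simp add: regularising_filter_def)
  from RF obtain CR where CR: "CR > 0" "\<forall>a>0. \<forall>l\<in>{0<..L}. l * F a l < CR"
    by (auto simp: regularising_filter_def)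
  from RF obtain CF where CF: "CF > 0" "\<forall>a>0. \<forall>l\<in>{0<..L}. \<bar>F a l\<bar> \<le> CF / a"
    by (auto simp: regularising_filter_def)
  from RF assms(11,12) have "filter_estimate F L \<nu>" by (simp add: regularising_filter_def)
  then obtain Cv where Cv: "Cv > 0"
    "\<forall>a>0. \<forall>l\<in>{0<..L}. l powr (\<nu>/2) * \<bar>1 - l * F a l\<bar> \<le> Cv * a powr (\<nu>/2)"
    by (auto simp: filter_estimate_def)
  define R where "R = max CR (max CF Cv)"
  have R0: "R > 0" using CR by (simp add: R_def)
  have lFb: "\<forall>a>0. \<forall>l\<in>{0<..L}. \<bar>l * F a l\<bar> \<le> R"
    unfolding R_def by (rule filter_lF_bound[OF CR(2) CF(2) Cv(2) assms(11) CF(1) Cv(1) CR(1)])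
  have LamL: "l \<in> {0<..L}" if "l \<in> Lam" for l
    using Lam_pos[OF that] Lam_le[OF that] by (simp add: L_def)
  define g where "g = (\<lambda>l::real. l powr (\<nu>/2))"
  have bg: "bnd g (L powr (\<nu>/2))"
  proof (rule bnd_of)
    show "\<forall>l\<in>Lam. \<bar>g l\<bar> \<le> L powr (\<nu>/2)"
    proof
      fix l assume "l \<in> Lam"
      hence l: "0 < l" "l \<le> L" using LamL by auto
      have "l powr (\<nu>/2) \<le> L powr (\<nu>/2)" using l assms(11) by (intro powr_mono2) auto
      thus "\<bar>g l\<bar> \<le> L powr (\<nu>/2)" by (simp add: g_def)
    qed
  qed simp
  from assms(14) obtain w where w: "mp_inverse K yhat = fun_calc g A w" "norm w \<le> \<rho>"
    by (auto simp: g_def)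
  define xd where "xd = mp_inverse K yhat"
  have xd: "xd = Phi g w" using w fun_calc_Phi[OF bg] by (simp add: xd_def)
  have KsY: "adjoint K yhat = A xd" unfolding xd_def by (rule Ks_yhat[OF assms(7)])
  have meas[measurable]: "Y i \<in> borel_measurable M" for i
    using assms(3) unfolding indep_vars_def2 by auto
  define \<sigma>2 where "\<sigma>2 = integral\<^sup>L M (\<lambda>\<omega>. (norm (Y 0 \<omega> - yhat))\<^sup>2)"
  have \<sigma>0: "\<sigma>2 \<ge> 0" by (simp add: \<sigma>2_def)
  define K0 where "K0 = 2 * CF * R * \<sigma>2 / c + 2 * Cv^2 * C powr \<nu>"
  show ?thesis
  proof (intro exI[of _ "sqrt K0"] allI impI)
    fix n :: nat assume n: "n \<ge> 1"
    define \<delta> where "\<delta> = real n powr (-1/2)"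
    have \<delta>0: "\<delta> > 0" using n by (simp add: \<delta>_def)
    define a where "a = \<alpha> \<delta>"
    define q where "q = (\<delta> / \<rho>) powr (2/(\<nu>+1))"
    have q0: "q > 0" using \<delta>0 assms(13) by (simp add: q_def)
    have aq: "c * q \<le> a" "a \<le> C * q" using assms(17) n by (simp_all add: a_def q_def \<delta>_def)
    have a0: "a > 0" using aq(1) assms(15) q0 by (smt (verit) mult_pos_pos)
    define h where "h = F a"
    obtain B where B: "\<forall>l\<in>{0<..L}. \<bar>h l\<bar> \<le> B" using Fb a0 by (auto simp: h_def)
    have bh: "bnd h (max B 0)" using B LamL by (force simp: bnd_def)
    have bS: "bnd (\<lambda>l. h l * (l * h l)) (CF / a * R)"
    proof (rule bnd_of)
      show "\<forall>l\<in>Lam. \<bar>h l * (l * h l)\<bar> \<le> CF / a * R"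
      proof
        fix l assume "l \<in> Lam"
        hence l: "l \<in> {0<..L}" by (rule LamL)
        have "\<bar>h l * (l * h l)\<bar> = \<bar>h l\<bar> * \<bar>l * h l\<bar>" by (simp add: abs_mult)
        also have "\<dots> \<le> CF / a * R"
          using CF lFb a0 l by (intro mult_mono) (auto simp: h_def)
        finally show "\<bar>h l * (l * h l)\<bar> \<le> CF / a * R" .
      qed
      show "0 \<le> CF / a * R" using CF(1) a0 R0 by simp
    qed
    have fch: "fun_calc h A = Phi h" by (rule fun_calc_Phi[OF bh])
    define b where "b = Cv * a powr (\<nu>/2) * \<rho>"
    have bias: "norm (Phi h (A xd) - xd) \<le> b"
    proof -
      have "norm (Phi h (A (Phi g w)) - Phi g w) \<le> (Cv * a powr (\<nu>/2)) * norm w"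
      proof (rule bias_bound[OF bh bg])
        show "\<forall>l\<in>Lam. \<bar>h l * (l * g l) - g l\<bar> \<le> Cv * a powr (\<nu>/2)"
        proof
          fix l assume "l \<in> Lam"
          hence l: "l \<in> {0<..L}" by (rule LamL)
          have "\<bar>h l * (l * g l) - g l\<bar> = g l * \<bar>1 - l * h l\<bar>"
          proof -
            have "h l * (l * g l) - g l = - (g l * (1 - l * h l))" by (simp add: algebra_simps)
            moreover have "g l \<ge> 0" by (simp add: g_def)
            ultimately show ?thesis by (simp add: abs_mult)
          qed
          also have "\<dots> \<le> Cv * a powr (\<nu>/2)" using Cv(2) a0 l by (simp add: g_def h_def)
          finally show "\<bar>h l * (l * g l) - g l\<bar> \<le> Cv * a powr (\<nu>/2)" .
        qed
        show "0 \<le> Cv * a powr (\<nu>/2)" using Cv(1) by simp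
      qed
      also have "\<dots> \<le> (Cv * a powr (\<nu>/2)) * \<rho>" using w(2) Cv(1) by (intro mult_left_mono) auto
      finally show ?thesis using xd by (simp add: b_def)
    qed
    have b0: "b \<ge> 0" using Cv(1) assms(13) by (simp add: b_def)
    define S where "S = CF / a * R"
    have S0: "S \<ge> 0" using CF(1) a0 R0 by (simp add: S_def)
    define T where "T = fun_calc h A \<circ> adjoint K"
    have T_eq: "T = (\<lambda>v. Phi h (adjoint K v))" unfolding T_def fch by (rule ext) simp
    have blT: "bounded_linear T" unfolding T_eq
      by (rule bounded_linear_compose[OF bl_Phi[OF bh] blKs])
    have T_meas[measurable]: "T \<in> borel_measurable borel"
      by (intro borel_measurable_continuous_onI linear_continuous_on blT)
    define D where "D = (\<lambda>\<omega>. (1 / real n) *\<^sub>R (\<Sum>i<n. Y i \<omega>) - yhat)"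
    define Er where "Er = (\<lambda>\<omega>. T ((1 / real n) *\<^sub>R (\<Sum>i<n. Y i \<omega>)) - xd)"
    have Er_bound: "(norm (Er \<omega>))\<^sup>2 \<le> 2 * S * (norm (D \<omega>))\<^sup>2 + 2 * b^2" for \<omega>
    proof -
      have "T ((1 / real n) *\<^sub>R (\<Sum>i<n. Y i \<omega>)) = T (D \<omega>) + T yhat"
        using linear_add[OF bounded_linear.linear[OF blT], of "D \<omega>" yhat] by (simp add: D_def)
      moreover have "T yhat = Phi h (A xd)" using KsY by (simp add: T_eq)
      ultimately have "Er \<omega> = T (D \<omega>) + (Phi h (A xd) - xd)" by (simp add: Er_def)
      hence "norm (Er \<omega>) \<le> norm (T (D \<omega>)) + norm (Phi h (A xd) - xd)"
        by (simp add: norm_triangle_ineq)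
      also have "\<dots> \<le> sqrt S * norm (D \<omega>) + b"
        using var_bound[OF bh bS, of "D \<omega>"] bias by (simp add: T_eq S_def)
      finally have e1: "norm (Er \<omega>) \<le> sqrt S * norm (D \<omega>) + b" .
      hence "(norm (Er \<omega>))\<^sup>2 \<le> (sqrt S * norm (D \<omega>) + b)^2" by (intro power_mono) auto
      also have "\<dots> \<le> 2 * (sqrt S * norm (D \<omega>))^2 + 2 * b^2"
        using sum_squares_ge_zero[of "sqrt S * norm (D \<omega>) - b" 0]
        by (simp add: power2_eq_square algebra_simps)
      also have "(sqrt S * norm (D \<omega>))^2 = S * (norm (D \<omega>))\<^sup>2"
        using S0 by (simp add: power_mult_distrib)
      finally show ?thesis by simp
    qed
    have ms: "integrable M (\<lambda>\<omega>. (norm (D \<omega>))\<^sup>2) \<and> integral\<^sup>L M (\<lambda>\<omega>. (norm (D \<omega>))\<^sup>2) = \<sigma>2 / real n"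
      unfolding D_def \<sigma>2_def
      by (rule mean_sq[OF assms(3) assms(4) assms(5) assms(6) assms(9) n])
    have intBound: "integrable M (\<lambda>\<omega>. 2 * S * (norm (D \<omega>))\<^sup>2 + 2 * b^2)"
      using ms by (intro Bochner_Integration.integrable_add integrable_mult_right) auto
    have Er_meas: "(\<lambda>\<omega>. (norm (Er \<omega>))\<^sup>2) \<in> borel_measurable M" unfolding Er_def by measurable
    have intEr: "integrable M (\<lambda>\<omega>. (norm (Er \<omega>))\<^sup>2)"
    proof (rule Bochner_Integration.integrable_bound[OF intBound Er_meas])
      show "AE \<omega> in M. norm ((norm (Er \<omega>))\<^sup>2) \<le> norm (2 * S * (norm (D \<omega>))\<^sup>2 + 2 * b^2)"
        using Er_bound S0 by (intro AE_I2) (auto simp: abs_of_nonneg)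
    qed
    have "integral\<^sup>L M (\<lambda>\<omega>. (norm (Er \<omega>))\<^sup>2) \<le> integral\<^sup>L M (\<lambda>\<omega>. 2 * S * (norm (D \<omega>))\<^sup>2 + 2 * b^2)"
      by (intro integral_mono intEr intBound Er_bound)
    also have "\<dots> = 2 * S * (\<sigma>2 / real n) + 2 * b^2"
      using ms by (simp add: Bochner_Integration.integral_add prob_space)
    finally have intle: "integral\<^sup>L M (\<lambda>\<omega>. (norm (Er \<omega>))\<^sup>2) \<le> 2 * S * (\<sigma>2 / real n) + 2 * b^2" .
    define Z where "Z = \<delta> powr (2 * \<nu>/(\<nu>+1)) * \<rho> powr (2/(\<nu>+1))"
    have dsq: "\<delta>^2 = 1 / real n"
    proof -
      have "\<delta>^2 = real n powr (2 * (-1/2))" unfolding \<delta>_def using n by (intro powr_sq_aux) simp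
      thus ?thesis using n by (simp add: powr_neg_one)
    qed
    have t1: "2 * S * (\<sigma>2 / real n) \<le> (2 * CF * R * \<sigma>2 / c) * Z"
    proof -
      have "2 * S * (\<sigma>2 / real n) = (2 * CF * R * \<sigma>2) * \<delta>^2 / a"
        by (simp add: S_def dsq field_simps)
      also have "\<dots> \<le> (2 * CF * R * \<sigma>2) * \<delta>^2 / (c * q)"
        using aq(1) assms(15) q0 CF(1) R0 \<sigma>0 a0
        by (intro divide_left_mono mult_nonneg_nonneg mult_pos_pos) auto
      also have "\<dots> = (2 * CF * R * \<sigma>2 / c) * (\<delta>^2 / q)" by (simp add: field_simps)
      also have "\<delta>^2 / q = Z" unfolding q_def Z_def by (rule powr_alg1[OF \<delta>0 assms(13) assms(11)])
      finally show ?thesis .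
    qed
    have t2: "2 * b^2 \<le> (2 * Cv^2 * C powr \<nu>) * Z"
    proof -
      have "b^2 = Cv^2 * a powr \<nu> * \<rho>^2"
        using powr_sq_aux[OF a0, of "\<nu>/2"] by (simp add: b_def power_mult_distrib)
      also have "\<dots> \<le> Cv^2 * (C * q) powr \<nu> * \<rho>^2"
        using aq(2) a0 assms(11) by (intro mult_right_mono mult_left_mono powr_mono2) auto
      also have "(C * q) powr \<nu> = C powr \<nu> * q powr \<nu>"
        using q0 assms(15,16) by (simp add: powr_mult)
      also have "Cv^2 * (C powr \<nu> * q powr \<nu>) * \<rho>^2 = Cv^2 * C powr \<nu> * (q powr \<nu> * \<rho>^2)"
        by (simp add: algebra_simps)
      also have "q powr \<nu> * \<rho>^2 = Z" unfolding q_def Z_def by (rule powr_alg2[OF \<delta>0 assms(13) assms(11)])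
      finally show ?thesis by simp
    qed
    have K00: "K0 \<ge> 0" using CF(1) R0 \<sigma>0 assms(15) Cv(1) by (simp add: K0_def)
    have Z0: "Z \<ge> 0" by (simp add: Z_def)
    have "integral\<^sup>L M (\<lambda>\<omega>. (norm (Er \<omega>))\<^sup>2) \<le> K0 * Z"
      using intle t1 t2 by (simp add: K0_def algebra_simps)
    hence "sqrt (integral\<^sup>L M (\<lambda>\<omega>. (norm (Er \<omega>))\<^sup>2)) \<le> sqrt K0 * sqrt Z"
      by (simp add: real_sqrt_mult[symmetric])
    also have "sqrt Z = \<delta> powr (\<nu>/(\<nu>+1)) * \<rho> powr (1/(\<nu>+1))"
      unfolding Z_def by (rule powr_alg3[OF \<delta>0 assms(13) assms(11)])
    finally have sq: "sqrt (integral\<^sup>L M (\<lambda>\<omega>. (norm (Er \<omega>))\<^sup>2))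
                       \<le> sqrt K0 * \<delta> powr (\<nu>/(\<nu>+1)) * \<rho> powr (1/(\<nu>+1))" by (simp add: mult.assoc)
    have "(\<integral>\<^sup>+ \<omega>. ennreal ((norm (Er \<omega>))\<^sup>2) \<partial>M) = ennreal (integral\<^sup>L M (\<lambda>\<omega>. (norm (Er \<omega>))\<^sup>2))"
      by (rule nn_integral_eq_integral[OF intEr]) auto
    hence fin: "(\<integral>\<^sup>+ \<omega>. ennreal ((norm (Er \<omega>))\<^sup>2) \<partial>M) < \<infinity>" by simp
    show "(\<integral>\<^sup>+ \<omega>. ennreal ((norm (
         (fun_calc (F (\<alpha> (real n powr (-1/2)))) (adjoint K \<circ> K) \<circ> adjoint K)
            ((1 / real n) *\<^sub>R (\<Sum>i<n. Y i \<omega>))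
         - mp_inverse K yhat))\<^sup>2) \<partial>M) < \<infinity> \<and>
     sqrt (\<integral>\<omega>. (norm (
         (fun_calc (F (\<alpha> (real n powr (-1/2)))) (adjoint K \<circ> K) \<circ> adjoint K)
            ((1 / real n) *\<^sub>R (\<Sum>i<n. Y i \<omega>))
         - mp_inverse K yhat))\<^sup>2 \<partial>M)
       \<le> sqrt K0 * (real n powr (-1/2)) powr (\<nu>/(\<nu>+1)) * \<rho> powr (1/(\<nu>+1))"
      using fin sq unfolding Er_def T_def xd_def h_def a_def \<delta>_def by simp
  qed
qed


end
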